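(* For the channel $Y(k)=X_1(k)+X_2(k)+S(k)+Z(k)$ with $\{Z(k)\}$ i.i.d. $\mathcal{N}(0,\sigma_Z^2)$, $\{S(k)\}$ i.i.d. with zero mean and finite variance $\sigma_S^2<\infty$ (not necessarily Gaussian) known non-causally to both transmitters, perfect causal output feedback to both transmitters, and average power constraints $P_1,P_2$: for every $\rho\in[0,1]$ and every pair $(R_1,R_2)$ with $$R_1=\tfrac12\log\Bigl(1+\tfrac{P_1(1-\rho^2)}{\sigma_Z^2}\Bigr),\quad R_2=\tfrac12\log\Bigl(1+\tfrac{P_2(1-\rho^2)}{\sigma_Z^2}\Bigr),\quad R_1+R_2=\tfrac12\log\Bigl(1+\tfrac{P_1+P_2+2\rho\sqrt{P_1P_2}}{\sigma_Z^2}\Bigr),$$ the rate pair $(R_1,R_2)$ is achievable; in particular the sum capacity of this channel equals the sum capacity of the Gaussian MAC with feedback without interference.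
   Context: Codes: $X_i(k)=f_{i,k}(w_i,S^n,Y^{k-1})$ with $w_i\in\{1,\dots,2^{nR_i}\}$, messages independent and uniform, average power constraint $\frac1n\sum_k\mathbb{E}[X_i(k)^2]\le P_i$ (asymptotically as $n\to\infty$), decoder $g(Y^n)$; achievable means average error probability tends to $0$ as $n\to\infty$. Logarithms base 2. *)

theory Defs
  imports "HOL-Probability.Probability"
begin

text \<open>Encoder type: time index k, message w, full state sequence s (non-causal),
  past outputs (Y(j) for j < k, zero elsewhere) gives the channel input X(k).
  Indices are 0-based: time k ranges over 0..n-1.\<close>
type_synonym encoder = "nat \<Rightarrow> nat \<Rightarrow> (nat \<Rightarrow> real) \<Rightarrow> (nat \<Rightarrow> real) \<Rightarrow> real"

fun mac_outs :: "encoder \<Rightarrow> encoder \<Rightarrow> nat \<Rightarrow> nat \<Rightarrow> (nat \<Rightarrow> real) \<Rightarrow> (nat \<Rightarrow> real)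
    \<Rightarrow> nat \<Rightarrow> real list" where
  "mac_outs f1 f2 w1 w2 s z 0 = []"
| "mac_outs f1 f2 w1 w2 s z (Suc k) =
     (let ys = mac_outs f1 f2 w1 w2 s z k;
          past = (\<lambda>j. if j < k then ys ! j else 0)
      in ys @ [f1 k w1 s past + f2 k w2 s past + s k + z k])"

definition past_out :: "encoder \<Rightarrow> encoder \<Rightarrow> nat \<Rightarrow> nat \<Rightarrow> (nat \<Rightarrow> real) \<Rightarrow> (nat \<Rightarrow> real)
    \<Rightarrow> nat \<Rightarrow> nat \<Rightarrow> real" where
  "past_out f1 f2 w1 w2 s z k = (\<lambda>j. if j < k then mac_outs f1 f2 w1 w2 s z k ! j else 0)"

definition mac_input :: "encoder \<Rightarrow> encoder \<Rightarrow> encoder \<Rightarrow> nat \<Rightarrow> nat \<Rightarrow> nat \<Rightarrow> (nat \<Rightarrow> real)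
    \<Rightarrow> (nat \<Rightarrow> real) \<Rightarrow> nat \<Rightarrow> real" where
  "mac_input f f1 f2 w w1 w2 s z k = f k w s (past_out f1 f2 w1 w2 s z k)"

definition sample_space :: "real measure \<Rightarrow> real \<Rightarrow> nat \<Rightarrow> ((nat \<Rightarrow> real) \<times> (nat \<Rightarrow> real)) measure" where
  "sample_space DS sigmaZ n =
     (PiM {..<n} (\<lambda>_. DS)) \<Otimes>\<^sub>M (PiM {..<n} (\<lambda>_. density lborel (normal_density 0 sigmaZ)))"

definition num_msgs :: "real \<Rightarrow> nat \<Rightarrow> nat" where
  "num_msgs R n = nat \<lceil>2 powr (real n * R)\<rceil>"

definition error_prob :: "real measure \<Rightarrow> real \<Rightarrow> nat \<Rightarrow> nat \<Rightarrow> nat \<Rightarrow> encoder \<Rightarrow> encoder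
    \<Rightarrow> ((nat \<Rightarrow> real) \<Rightarrow> nat \<times> nat) \<Rightarrow> real" where
  "error_prob DS sigmaZ n M1 M2 f1 f2 g =
     (1 / (real M1 * real M2)) *
     (\<Sum>w1\<in>{1..M1}. \<Sum>w2\<in>{1..M2}.
        measure (sample_space DS sigmaZ n)
          {\<omega> \<in> space (sample_space DS sigmaZ n).
             g (past_out f1 f2 w1 w2 (fst \<omega>) (snd \<omega>) n) \<noteq> (w1, w2)})"

definition total_energy :: "real measure \<Rightarrow> real \<Rightarrow> nat \<Rightarrow> nat \<Rightarrow> nat \<Rightarrow> encoder
    \<Rightarrow> encoder \<Rightarrow> encoder \<Rightarrow> bool \<Rightarrow> ennreal" where
  "total_energy DS sigmaZ n M1 M2 f1 f2 f first =
     (\<Sum>k<n. \<Sum>w1\<in>{1..M1}. \<Sum>w2\<in>{1..M2}.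
        \<integral>\<^sup>+ \<omega>. ennreal ((mac_input f f1 f2 (if first then w1 else w2) w1 w2
                                 (fst \<omega>) (snd \<omega>) k)\<^sup>2) \<partial>sample_space DS sigmaZ n)"

definition measurable_code :: "encoder \<Rightarrow> encoder \<Rightarrow> ((nat \<Rightarrow> real) \<Rightarrow> nat \<times> nat) \<Rightarrow> bool" where
  "measurable_code f1 f2 g \<longleftrightarrow>
     (\<forall>k w. (\<lambda>(s, y). f1 k w s y) \<in> borel_measurable
               (PiM UNIV (\<lambda>_::nat. borel :: real measure) \<Otimes>\<^sub>M PiM UNIV (\<lambda>_::nat. borel :: real measure))) \<and>
     (\<forall>k w. (\<lambda>(s, y). f2 k w s y) \<in> borel_measurable
               (PiM UNIV (\<lambda>_::nat. borel :: real measure) \<Otimes>\<^sub>M PiM UNIV (\<lambda>_::nat. borel :: real measure))) \<and>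
     g \<in> measurable (PiM UNIV (\<lambda>_::nat. borel :: real measure)) (count_space UNIV)"

definition achievable :: "real measure \<Rightarrow> real \<Rightarrow> real \<Rightarrow> real \<Rightarrow> real \<Rightarrow> real \<Rightarrow> bool" where
  "achievable DS sigmaZ P1 P2 R1 R2 \<longleftrightarrow>
     (\<exists>(f1 :: nat \<Rightarrow> encoder) (f2 :: nat \<Rightarrow> encoder) (g :: nat \<Rightarrow> (nat \<Rightarrow> real) \<Rightarrow> nat \<times> nat).
        (\<forall>n. measurable_code (f1 n) (f2 n) (g n)) \<and>
        (\<forall>\<epsilon>>0. eventually (\<lambda>n.
            total_energy DS sigmaZ n (num_msgs R1 n) (num_msgs R2 n) (f1 n) (f2 n) (f1 n) True
              \<le> ennreal (real n * real (num_msgs R1 n) * real (num_msgs R2 n) * (P1 + \<epsilon>)) \<and>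
            total_energy DS sigmaZ n (num_msgs R1 n) (num_msgs R2 n) (f1 n) (f2 n) (f2 n) False
              \<le> ennreal (real n * real (num_msgs R1 n) * real (num_msgs R2 n) * (P2 + \<epsilon>)))
          sequentially) \<and>
        (\<lambda>n. error_prob DS sigmaZ n (num_msgs R1 n) (num_msgs R2 n) (f1 n) (f2 n) (g n))
          \<longlonglongrightarrow> 0)"

end

theory Submission
  imports Defs "HOL-Probability.Probability" "HOL-Real_Asymp.Real_Asymp"
begin


locale ozarow =
  fixes N x y \<rho> :: real
  assumes N_pos: "N > 0" and x_nn: "x \<ge> 0" and y_nn: "y \<ge> 0"
    and rho_nn: "\<rho> \<ge> 0" and rho_lt: "\<rho> < 1"
    and xy_pos: "x\<^sup>2 + y\<^sup>2 > 0"
    and fixp: "(N + x\<^sup>2 * (1 - \<rho>\<^sup>2)) * (N + y\<^sup>2 * (1 - \<rho>\<^sup>2)) = N * (x\<^sup>2 + y\<^sup>2 + 2*\<rho>*x*y + N)"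
begin

definition "V = x\<^sup>2 + y\<^sup>2 + 2*\<rho>*x*y + N"
definition "r1 = 1 + x\<^sup>2 * (1 - \<rho>\<^sup>2) / N"
definition "r2 = 1 + y\<^sup>2 * (1 - \<rho>\<^sup>2) / N"
definition "b1 = (x + \<rho>*y) / V"
definition "b2 = (y + \<rho>*x) / V"

lemma V_gt_N: "V > N"
proof -
  have "x\<^sup>2 + y\<^sup>2 + 2*\<rho>*x*y > 0" using xy_pos x_nn y_nn rho_nn
    by (metis add_nonneg_nonneg add_pos_nonneg mult_nonneg_nonneg zero_le_numeral)
  thus ?thesis unfolding V_def by simp
qed

lemma V_pos: "V > 0" using V_gt_N N_pos by simp

lemma r1_ge: "r1 \<ge> 1" using N_pos rho_lt rho_nn unfolding r1_def
  by (simp add: power_le_one)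
lemma r2_ge: "r2 \<ge> 1" using N_pos rho_lt rho_nn unfolding r2_def
  by (simp add: power_le_one)

lemma r12: "r1 * r2 = V / N"
  using fixp N_pos unfolding r1_def r2_def V_def by (simp add: field_simps)

lemma V_r1: "V = r1 * (N + y\<^sup>2 * (1 - \<rho>\<^sup>2))"
  using fixp N_pos unfolding r1_def V_def by (simp add: field_simps)
lemma V_r2: "V = r2 * (N + x\<^sup>2 * (1 - \<rho>\<^sup>2))"
  using fixp N_pos unfolding r2_def V_def by (simp add: field_simps)

definition "AA = (1 - \<rho>\<^sup>2) * x * y - \<rho> * N"

lemma AA_sq: "AA\<^sup>2 = \<rho>\<^sup>2 * N * V"
proof -
  have "AA\<^sup>2 - \<rho>\<^sup>2 * N * V = ((1-\<rho>\<^sup>2)^2 * x\<^sup>2*y\<^sup>2 - 2*\<rho>*N*x*y - \<rho>\<^sup>2*N*(x\<^sup>2+y\<^sup>2))"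
    unfolding AA_def V_def by (simp add: algebra_simps power2_eq_square)
  also have "(1-\<rho>\<^sup>2)^2 * x\<^sup>2*y\<^sup>2 - 2*\<rho>*N*x*y - \<rho>\<^sup>2*N*(x\<^sup>2+y\<^sup>2) = 0"
    using fixp by (simp add: algebra_simps power2_eq_square)
  finally show ?thesis by simp
qed

lemma AA_nn: "AA \<ge> 0"
proof (rule ccontr)
  assume "\<not> AA \<ge> 0"
  hence neg: "AA < 0" by simp
  have "\<rho>\<^sup>2 * N * N \<le> \<rho>\<^sup>2 * N * V" using V_gt_N N_pos
    by (intro mult_left_mono) auto
  hence "(\<rho>*N)\<^sup>2 \<le> AA\<^sup>2" using AA_sq by (simp add: power2_eq_square algebra_simps)
  hence "\<rho>*N \<le> -AA" using neg rho_nn N_pos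
    by (metis abs_le_square_iff abs_of_neg abs_of_nonneg mult_nonneg_nonneg less_imp_le)
  hence xy0: "(1 - \<rho>\<^sup>2) * x * y \<le> 0" unfolding AA_def by simp
  have "(1 - \<rho>\<^sup>2) * x * y \<ge> 0" using rho_lt rho_nn x_nn y_nn
    by (simp add: power_le_one)
  hence "(1 - \<rho>\<^sup>2) * x * y = 0" using xy0 by simp
  hence "AA = - \<rho> * N" unfolding AA_def by simp
  hence "AA\<^sup>2 = \<rho>\<^sup>2 * N * N" by (simp add: power2_eq_square)
  hence "\<rho>\<^sup>2 * N * N = \<rho>\<^sup>2 * N * V" by (metis AA_sq)
  hence "\<rho>\<^sup>2 * N * (V - N) = 0" by (simp only: right_diff_distrib)
  hence "\<rho> = 0" using V_gt_N N_pos by auto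
  thus False using neg \<open>AA = - \<rho> * N\<close> by simp
qed

lemma AA_eq: "AA = \<rho> * sqrt (N * V)"
proof -
  have "sqrt (AA\<^sup>2) = sqrt ((\<rho> * sqrt (N*V))\<^sup>2)"
    using AA_sq N_pos V_pos by (simp add: power_mult_distrib)
  thus ?thesis using AA_nn rho_nn N_pos V_pos by simp
qed

lemma corr_step: "sqrt r1 * sqrt r2 * (\<rho> - b1 * b2 * V) = - \<rho>"
proof -
  have q1: "b1 * b2 * V = (x + \<rho>*y) * (y + \<rho>*x) / V"
    unfolding b1_def b2_def using V_pos by (simp add: field_simps power2_eq_square)
  have q2: "\<rho> * V - (x + \<rho>*y) * (y + \<rho>*x) = - AA"
    unfolding AA_def V_def by (simp add: algebra_simps power2_eq_square)
  have e1: "\<rho> - b1 * b2 * V = - AA / V"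
  proof -
    have "\<rho> - b1 * b2 * V = (\<rho> * V - (x + \<rho>*y) * (y + \<rho>*x)) / V"
      unfolding q1 using V_pos by (simp add: diff_divide_distrib)
    thus ?thesis using q2 by simp
  qed
  have e2: "sqrt r1 * sqrt r2 = sqrt (V / N)"
    by (simp add: r12 real_sqrt_mult[symmetric])
  have "sqrt (V/N) * sqrt (N * V) = V" using N_pos V_pos
    by (simp add: real_sqrt_mult[symmetric])
  thus ?thesis unfolding e1 e2 AA_eq using V_pos
    by (simp add: field_simps)
qed

lemma norm1_step: "r1 * (1 - b1\<^sup>2 * V) = 1"
proof -
  have a: "V - (x + \<rho>*y)\<^sup>2 = N + y\<^sup>2 * (1 - \<rho>\<^sup>2)" by (simp add: V_def power2_eq_square algebra_simps)
  have "1 - b1\<^sup>2 * V = (V - (x + \<rho>*y)\<^sup>2) / V"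
    unfolding b1_def using V_pos by (simp add: field_simps power2_eq_square)
  hence "1 - b1\<^sup>2 * V = (N + y\<^sup>2 * (1 - \<rho>\<^sup>2)) / V" using a by simp
  hence "r1 * (1 - b1\<^sup>2 * V) = r1 * (N + y\<^sup>2 * (1 - \<rho>\<^sup>2)) / V" by simp
  also have "\<dots> = V / V" using V_r1 by simp
  also have "\<dots> = 1" using V_pos by simp
  finally show ?thesis .
qed

lemma norm2_step: "r2 * (1 - b2\<^sup>2 * V) = 1"
proof -
  have a: "V - (y + \<rho>*x)\<^sup>2 = N + x\<^sup>2 * (1 - \<rho>\<^sup>2)" by (simp add: V_def power2_eq_square algebra_simps)
  have "1 - b2\<^sup>2 * V = (V - (y + \<rho>*x)\<^sup>2) / V"
    unfolding b2_def using V_pos by (simp add: field_simps power2_eq_square)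
  hence "1 - b2\<^sup>2 * V = (N + x\<^sup>2 * (1 - \<rho>\<^sup>2)) / V" using a by simp
  hence "r2 * (1 - b2\<^sup>2 * V) = r2 * (N + x\<^sup>2 * (1 - \<rho>\<^sup>2)) / V" by simp
  also have "\<dots> = V / V" using V_r2 by simp
  also have "\<dots> = 1" using V_pos by simp
  finally show ?thesis .
qed

end

lemma alg_A: fixes q rr b x y t \<rho> N SU SW SUW V :: real
 assumes "q*q = rr" "t*t = 1" "N*SU = 1" "N*SW = 1" "N*SUW = t*\<rho>" "V = x^2+y^2+2*\<rho>*x*y+N"
 shows "N * ((q*(1-b*x))*(q*(1-b*x))*SU + ((q*(1-b*x))*(-q*b*t*y) + (-q*b*t*y)*(q*(1-b*x)))*SUW + (-q*b*t*y)*(-q*b*t*y)*SW + (-q*b)*(-q*b)) = rr*(1 - 2*b*(x+\<rho>*y) + b^2*V)"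
proof -
  have "N * ((q*(1-b*x))*(q*(1-b*x))*SU + ((q*(1-b*x))*(-q*b*t*y) + (-q*b*t*y)*(q*(1-b*x)))*SUW + (-q*b*t*y)*(-q*b*t*y)*SW + (-q*b)*(-q*b))
    = (q*q) * ((1-b*x)^2*(N*SU) - 2*(1-b*x)*b*t*y*(N*SUW) + b^2*y^2*(t*t)*(N*SW) + N*b^2)"
    by (simp add: algebra_simps power2_eq_square)
  also have "\<dots> = rr*(1 - 2*b*(x+\<rho>*y) + b^2*V)"
  proof -
    have tt: "\<And>z. t*(t*z) = z" using assms(2) by (metis mult.assoc mult_1)
    show ?thesis using assms by (simp add: algebra_simps power2_eq_square tt)
  qed
  finally show ?thesis .
qed

lemma alg_B: fixes q rr b x y t \<rho> N SU SW SUW V :: real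
 assumes "q*q = rr" "t*t = 1" "N*SU = 1" "N*SW = 1" "N*SUW = t*\<rho>" "V = x^2+y^2+2*\<rho>*x*y+N"
 shows "N * ((-q*t*b*x)*(-q*t*b*x)*SU + ((-q*t*b*x)*(q*(1-b*y)) + (q*(1-b*y))*(-q*t*b*x))*SUW + (q*(1-b*y))*(q*(1-b*y))*SW + (-q*t*b)*(-q*t*b)) = rr*(1 - 2*b*(y+\<rho>*x) + b^2*V)"
proof -
  have "N * ((-q*t*b*x)*(-q*t*b*x)*SU + ((-q*t*b*x)*(q*(1-b*y)) + (q*(1-b*y))*(-q*t*b*x))*SUW + (q*(1-b*y))*(q*(1-b*y))*SW + (-q*t*b)*(-q*t*b))
    = (q*q) * (b^2*x^2*(t*t)*(N*SU) - 2*(1-b*y)*b*t*x*(N*SUW) + (1-b*y)^2*(N*SW) + N*b^2*(t*t))"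
    by (simp add: algebra_simps power2_eq_square)
  also have "\<dots> = rr*(1 - 2*b*(y+\<rho>*x) + b^2*V)"
  proof -
    have tt: "\<And>z. t*(t*z) = z" using assms(2) by (metis mult.assoc mult_1)
    show ?thesis using assms by (simp add: algebra_simps power2_eq_square tt)
  qed
  finally show ?thesis .
qed

lemma alg_C: fixes qa qb b1 b2 x y t \<rho> N SU SW SUW V :: real
 assumes "t*t = 1" "N*SU = 1" "N*SW = 1" "N*SUW = t*\<rho>" "V = x^2+y^2+2*\<rho>*x*y+N"
 shows "N * ((qa*(1-b1*x))*(-qb*t*b2*x)*SU + ((qa*(1-b1*x))*(qb*(1-b2*y)) + (-qa*b1*t*y)*(-qb*t*b2*x))*SUW + (-qa*b1*t*y)*(qb*(1-b2*y))*SW + (-qa*b1)*(-qb*t*b2))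
   = qa*qb*t*(\<rho> - b1*(y+\<rho>*x) - b2*(x+\<rho>*y) + b1*b2*V)"
proof -
  have "N * ((qa*(1-b1*x))*(-qb*t*b2*x)*SU + ((qa*(1-b1*x))*(qb*(1-b2*y)) + (-qa*b1*t*y)*(-qb*t*b2*x))*SUW + (-qa*b1*t*y)*(qb*(1-b2*y))*SW + (-qa*b1)*(-qb*t*b2))
    = qa*qb*(-(1-b1*x)*t*b2*x*(N*SU) + ((1-b1*x)*(1-b2*y) + b1*b2*x*y*(t*t))*(N*SUW) - b1*t*y*(1-b2*y)*(N*SW) + N*b1*t*b2)"
    by (simp add: algebra_simps power2_eq_square)
  also have "\<dots> = qa*qb*t*(\<rho> - b1*(y+\<rho>*x) - b2*(x+\<rho>*y) + b1*b2*V)"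
  proof -
    have tt: "\<And>z. t*(t*z) = z" using assms(1) by (metis mult.assoc mult_1)
    show ?thesis using assms by (simp add: algebra_simps power2_eq_square tt)
  qed
  finally show ?thesis .
qed

context ozarow begin
lemma b1V: "b1 * V = x + \<rho>*y" using V_pos unfolding b1_def by simp
lemma b2V: "b2 * V = y + \<rho>*x" using V_pos unfolding b2_def by simp

definition sg :: "nat \<Rightarrow> real" where "sg m = (-1)^m"
lemma sg_sq: "sg m * sg m = 1" unfolding sg_def by (simp add: power_mult_distrib[symmetric])
lemma sg_Suc: "sg (Suc m) = - sg m" unfolding sg_def by simp

definition cyv :: "(nat \<Rightarrow> real) \<Rightarrow> (nat \<Rightarrow> real) \<Rightarrow> nat \<Rightarrow> nat \<Rightarrow> real" where
  "cyv u w m = (\<lambda>j. x * u j + sg m * y * w j + (if j = m+2 then 1 else 0))"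

primrec ovec :: "nat \<Rightarrow> (nat \<Rightarrow> real) \<times> (nat \<Rightarrow> real)" where
  "ovec 0 = ((\<lambda>j. if j = 0 then 1 / sqrt N else 0),
             (\<lambda>j. if j = 1 then sqrt (1 - \<rho>\<^sup>2) / sqrt N else if j = 0 then \<rho> / sqrt N else 0))"
| "ovec (Suc m) = (\<lambda>j. sqrt r1 * (fst (ovec m) j - b1 * cyv (fst (ovec m)) (snd (ovec m)) m j),
                   \<lambda>j. sqrt r2 * (snd (ovec m) j - sg m * b2 * cyv (fst (ovec m)) (snd (ovec m)) m j))"

definition "ou m = fst (ovec m)"
definition "ow m = snd (ovec m)"
definition "cy m = cyv (ou m) (ow m) m"

lemma ou_Suc: "ou (Suc m) = (\<lambda>j. sqrt r1 * (ou m j - b1 * cy m j))"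
  unfolding ou_def ow_def cy_def by simp
lemma ow_Suc: "ow (Suc m) = (\<lambda>j. sqrt r2 * (ow m j - sg m * b2 * cy m j))"
  unfolding ou_def ow_def cy_def by simp

lemma sum_step:
  fixes u w :: "nat \<Rightarrow> real"
  assumes "u K = 0" "w K = 0"
  shows "(\<Sum>j<Suc K. (c1 * u j + c2 * w j + c3 * (if j = K then 1 else 0)) *
                      (d1 * u j + d2 * w j + d3 * (if j = K then 1 else 0)))
       = c1*d1 * (\<Sum>j<K. u j * u j) + (c1*d2 + c2*d1) * (\<Sum>j<K. u j * w j)
         + c2*d2 * (\<Sum>j<K. w j * w j) + c3 * d3"
proof -
  have "(\<Sum>j<K. (c1 * u j + c2 * w j + c3 * (if j = K then 1 else 0)) *
                      (d1 * u j + d2 * w j + d3 * (if j = K then 1 else 0)))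
       = (\<Sum>j<K. c1*d1 * (u j * u j) + (c1*d2 + c2*d1) * (u j * w j) + c2*d2 * (w j * w j))"
    by (intro sum.cong) (auto simp: algebra_simps)
  also have "\<dots> = c1*d1 * (\<Sum>j<K. u j * u j) + (c1*d2 + c2*d1) * (\<Sum>j<K. u j * w j)
         + c2*d2 * (\<Sum>j<K. w j * w j)"
    by (simp add: sum.distrib sum_distrib_left)
  finally show ?thesis using assms by simp
qed

definition "ip K a b = N * (\<Sum>j<K. a j * b j)"

lemma ovec_inv:
  "ip (m+2) (ou m) (ou m) = 1 \<and> ip (m+2) (ow m) (ow m) = 1 \<and> ip (m+2) (ou m) (ow m) = sg m * \<rho>
   \<and> (\<forall>j\<ge>m+2. ou m j = 0 \<and> ow m j = 0)"
proof (induction m)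
  case 0
  have q: "1 - \<rho>\<^sup>2 \<ge> 0" using rho_nn rho_lt by (simp add: power_le_one)
  have sN: "sqrt N * sqrt N = N" using N_pos by simp
  have sq: "sqrt (1 - \<rho>\<^sup>2) * sqrt (1 - \<rho>\<^sup>2) = 1 - \<rho>\<^sup>2" using q by simp
  have two: "{..<2::nat} = {0, 1}" by auto
  have w: "ip 2 (ow 0) (ow 0) = 1"
  proof -
    have "ip 2 (ow 0) (ow 0) = N * ((\<rho> / sqrt N) * (\<rho> / sqrt N) + (sqrt (1 - \<rho>\<^sup>2) / sqrt N) * (sqrt (1 - \<rho>\<^sup>2) / sqrt N))"
      unfolding ip_def ow_def two by simp
    also have "\<dots> = N * ((\<rho>\<^sup>2 + (1 - \<rho>\<^sup>2)) / (sqrt N * sqrt N))"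
      using q N_pos by (simp add: times_divide_times_eq add_divide_distrib power2_eq_square diff_divide_distrib)
    also have "\<dots> = 1" using N_pos unfolding sN by simp
    finally show ?thesis .
  qed
  have u: "ip 2 (ou 0) (ou 0) = 1"
  proof -
    have "ip 2 (ou 0) (ou 0) = N * ((1 / sqrt N) * (1 / sqrt N))"
      unfolding ip_def ou_def two by simp
    also have "\<dots> = 1" using N_pos sN by simp
    finally show ?thesis .
  qed
  have uw: "ip 2 (ou 0) (ow 0) = \<rho>"
  proof -
    have "ip 2 (ou 0) (ow 0) = N * ((1 / sqrt N) * (\<rho> / sqrt N))"
      unfolding ip_def ou_def ow_def two by simp
    also have "\<dots> = \<rho>" using N_pos sN by simp
    finally show ?thesis .
  qed
  have supp0: "\<forall>j\<ge>2. ou 0 j = 0 \<and> ow 0 j = 0" by (auto simp: ou_def ow_def)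
  show ?case unfolding add_0 sg_def power_0 mult_1_left using u w uw supp0 by blast
next
  case (Suc m)
  let ?K = "m+2"
  define t where "t = sg m"
  have t2: "t * t = 1" unfolding t_def by (rule sg_sq)
  have supp: "\<And>j. j \<ge> ?K \<Longrightarrow> ou m j = 0 \<and> ow m j = 0" using Suc.IH by blast
  have U: "N * (\<Sum>j<?K. ou m j * ou m j) = 1" and W: "N * (\<Sum>j<?K. ow m j * ow m j) = 1"
    and UW: "N * (\<Sum>j<?K. ou m j * ow m j) = t * \<rho>"
    using Suc.IH unfolding ip_def t_def by auto
  have eu: "ou (Suc m) = (\<lambda>j. (sqrt r1 * (1 - b1*x)) * ou m j + (- sqrt r1 * b1 * t * y) * ow m j
                 + (- sqrt r1 * b1) * (if j = ?K then 1 else 0))"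
    unfolding ou_Suc cy_def cyv_def t_def by (auto simp: algebra_simps)
  have ew: "ow (Suc m) = (\<lambda>j. (- sqrt r2 * t * b2 * x) * ou m j + (sqrt r2 * (1 - b2 * y)) * ow m j
                 + (- sqrt r2 * t * b2) * (if j = ?K then 1 else 0))"
  proof -
    have "sg m = 1 \<or> sg m = -1" unfolding sg_def by (cases "even m") (simp_all add: neg_one_even_power neg_one_odd_power)
    thus ?thesis unfolding ow_Suc cy_def cyv_def t_def by (auto simp: algebra_simps fun_eq_iff)
  qed
  have sK: "Suc m + 2 = Suc ?K" by simp
  have r1p: "sqrt r1 * sqrt r1 = r1" using r1_ge by simp
  have r2p: "sqrt r2 * sqrt r2 = r2" using r2_ge by simp
  have SUWt: "N * (\<Sum>j<?K. ou m j * ow m j) = t * \<rho>" using UW by simp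
  have Vd: "V = x^2+y^2+2*\<rho>*x*y+N" by (simp add: V_def)
  have A: "ip (Suc m + 2) (ou (Suc m)) (ou (Suc m)) = 1"
  proof -
    have "ip (Suc m + 2) (ou (Suc m)) (ou (Suc m)) =
      N * ((sqrt r1 * (1 - b1*x)) * (sqrt r1 * (1 - b1*x)) * (\<Sum>j<?K. ou m j * ou m j)
        + ((sqrt r1 * (1 - b1*x)) * (- sqrt r1 * b1 * t * y) + (- sqrt r1 * b1 * t * y) * (sqrt r1 * (1 - b1*x))) * (\<Sum>j<?K. ou m j * ow m j)
        + (- sqrt r1 * b1 * t * y) * (- sqrt r1 * b1 * t * y) * (\<Sum>j<?K. ow m j * ow m j)
        + (- sqrt r1 * b1) * (- sqrt r1 * b1))"
      unfolding ip_def sK eu by (subst sum_step) (use supp in auto)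
    also have "\<dots> = r1 * (1 - 2 * b1 * (x + \<rho> * y) + b1^2 * V)"
      by (rule alg_A[OF r1p t2 U W SUWt Vd])
    also have "\<dots> = r1 * (1 - b1^2 * V)" unfolding b1V[symmetric] by (simp add: power2_eq_square)
    also have "\<dots> = 1" by (rule norm1_step)
    finally show ?thesis .
  qed
  have B: "ip (Suc m + 2) (ow (Suc m)) (ow (Suc m)) = 1"
  proof -
    have "ip (Suc m + 2) (ow (Suc m)) (ow (Suc m)) =
      N * ((- sqrt r2 * t * b2 * x) * (- sqrt r2 * t * b2 * x) * (\<Sum>j<?K. ou m j * ou m j)
        + ((- sqrt r2 * t * b2 * x) * (sqrt r2 * (1 - b2 * y)) + (sqrt r2 * (1 - b2 * y)) * (- sqrt r2 * t * b2 * x)) * (\<Sum>j<?K. ou m j * ow m j)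
        + (sqrt r2 * (1 - b2 * y)) * (sqrt r2 * (1 - b2 * y)) * (\<Sum>j<?K. ow m j * ow m j)
        + (- sqrt r2 * t * b2) * (- sqrt r2 * t * b2))"
      unfolding ip_def sK ew by (subst sum_step) (use supp in auto)
    also have "\<dots> = r2 * (1 - 2 * b2 * (y + \<rho> * x) + b2^2 * V)"
      by (rule alg_B[OF r2p t2 U W SUWt Vd])
    also have "\<dots> = r2 * (1 - b2^2 * V)" unfolding b2V[symmetric] by (simp add: power2_eq_square)
    also have "\<dots> = 1" by (rule norm2_step)
    finally show ?thesis .
  qed
  have C: "ip (Suc m + 2) (ou (Suc m)) (ow (Suc m)) = sg (Suc m) * \<rho>"
  proof -
    have "ip (Suc m + 2) (ou (Suc m)) (ow (Suc m)) =
      N * ((sqrt r1 * (1 - b1*x)) * (- sqrt r2 * t * b2 * x) * (\<Sum>j<?K. ou m j * ou m j)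
        + ((sqrt r1 * (1 - b1*x)) * (sqrt r2 * (1 - b2 * y)) + (- sqrt r1 * b1 * t * y) * (- sqrt r2 * t * b2 * x)) * (\<Sum>j<?K. ou m j * ow m j)
        + (- sqrt r1 * b1 * t * y) * (sqrt r2 * (1 - b2 * y)) * (\<Sum>j<?K. ow m j * ow m j)
        + (- sqrt r1 * b1) * (- sqrt r2 * t * b2))"
      unfolding ip_def sK eu ew by (subst sum_step) (use supp in auto)
    also have "\<dots> = sqrt r1 * sqrt r2 * t * (\<rho> - b1 * (y + \<rho>*x) - b2 * (x + \<rho>*y) + b1 * b2 * V)"
      by (rule alg_C[OF t2 U W SUWt Vd])
    also have "\<dots> = t * (sqrt r1 * sqrt r2 * (\<rho> - b1 * b2 * V))"
      unfolding b1V[symmetric] b2V[symmetric] by (simp add: algebra_simps)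
    also have "\<dots> = sg (Suc m) * \<rho>" unfolding corr_step t_def sg_Suc by simp
    finally show ?thesis .
  qed
  have D: "\<forall>j\<ge>Suc m+2. ou (Suc m) j = 0 \<and> ow (Suc m) j = 0"
    using supp by (auto simp: eu ew)
  show ?case using A B C D by blast
qed

end


definition Gm :: "real \<Rightarrow> real measure" where "Gm \<sigma> = density lborel (normal_density 0 \<sigma>)"

lemma Gm_prob: "\<sigma> > 0 \<Longrightarrow> prob_space (Gm \<sigma>)"
  unfolding Gm_def by (rule prob_space_normal_density)

lemma Gm_sets[simp, measurable_cong]: "sets (Gm \<sigma>) = sets borel"
  unfolding Gm_def by simp

lemma Gm_mom1: assumes "\<sigma> > 0"
  shows "integrable (Gm \<sigma>) (\<lambda>v. v)" "(\<integral>v. v \<partial>Gm \<sigma>) = 0"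
proof -
  have h: "has_bochner_integral lborel (\<lambda>v. normal_density 0 \<sigma> v * v) 0"
    using normal_moment_nz_1[OF assms, of 0] by simp
  show "integrable (Gm \<sigma>) (\<lambda>v. v)" unfolding Gm_def
    using h by (subst integrable_density) (auto simp: has_bochner_integral_iff)
  show "(\<integral>v. v \<partial>Gm \<sigma>) = 0" unfolding Gm_def
    using h by (subst integral_density) (auto simp: has_bochner_integral_iff)
qed

lemma Gm_mom2: assumes "\<sigma> > 0"
  shows "integrable (Gm \<sigma>) (\<lambda>v. v * v)" "(\<integral>v. v * v \<partial>Gm \<sigma>) = \<sigma>\<^sup>2"
proof -
  have h: "has_bochner_integral lborel (\<lambda>v. normal_density 0 \<sigma> v * (v * v)) (\<sigma>\<^sup>2)"
    using normal_moment_even[OF assms, of 0 1] by (simp add: power2_eq_square)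
  show "integrable (Gm \<sigma>) (\<lambda>v. v * v)" unfolding Gm_def
    using h by (subst integrable_density) (auto simp: has_bochner_integral_iff)
  show "(\<integral>v. v * v \<partial>Gm \<sigma>) = \<sigma>\<^sup>2" unfolding Gm_def
    using h by (subst integral_density) (auto simp: has_bochner_integral_iff)
qed

lemma Gm_pair:
  fixes n i j :: nat
  assumes "\<sigma> > 0" "i < n" "j < n"
  shows "integrable (PiM {..<n} (\<lambda>_. Gm \<sigma>)) (\<lambda>z. z i * z j)"
        "(\<integral>z. z i * z j \<partial>PiM {..<n} (\<lambda>_. Gm \<sigma>)) = (if i = j then \<sigma>\<^sup>2 else 0)"
proof -
  interpret P: prob_space "Gm \<sigma>" using Gm_prob[OF assms(1)] .
  interpret product_sigma_finite "\<lambda>_. Gm \<sigma>" unfolding product_sigma_finite_def using prob_space_imp_sigma_finite[OF Gm_prob[OF assms(1)]] by simp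
  define f where "f l v = (if l = i then v else 1) * (if l = j then v else (1::real))" for l v
  have fint: "integrable (Gm \<sigma>) (f l)" for l
  proof -
    have "f l = (\<lambda>v. v * v) \<or> f l = (\<lambda>v. v) \<or> f l = (\<lambda>v. 1)"
      unfolding f_def by (auto simp: fun_eq_iff)
    thus ?thesis using Gm_mom1(1)[OF assms(1)] Gm_mom2(1)[OF assms(1)] P.integrable_const by metis
  qed
  have f1: "l \<noteq> i \<Longrightarrow> l \<noteq> j \<Longrightarrow> f l = (\<lambda>v. 1)" for l by (auto simp: f_def fun_eq_iff)
  have prodf: "(\<Prod>l\<in>{..<n}. f l (z l)) = z i * z j" for z
  proof (cases "i = j")
    case True
    have "(\<Prod>l\<in>{..<n}. f l (z l)) = f i (z i) * (\<Prod>l\<in>{..<n}-{i}. f l (z l))"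
      using assms by (subst prod.remove[of _ i]) auto
    also have "(\<Prod>l\<in>{..<n}-{i}. f l (z l)) = 1" using True by (intro prod.neutral) (auto simp: f_def)
    finally show ?thesis using True by (simp add: f_def)
  next
    case False
    have "(\<Prod>l\<in>{..<n}. f l (z l)) = f i (z i) * (\<Prod>l\<in>{..<n}-{i}. f l (z l))"
      using assms by (subst prod.remove[of _ i]) auto
    also have "(\<Prod>l\<in>{..<n}-{i}. f l (z l)) = f j (z j) * (\<Prod>l\<in>{..<n}-{i}-{j}. f l (z l))"
      using assms False by (subst prod.remove[of _ j]) auto
    also have "(\<Prod>l\<in>{..<n}-{i}-{j}. f l (z l)) = 1" by (intro prod.neutral) (auto simp: f_def)
    finally show ?thesis using False by (simp add: f_def)
  qed
  have I: "integrable (PiM {..<n} (\<lambda>_. Gm \<sigma>)) (\<lambda>z. \<Prod>l\<in>{..<n}. f l (z l))"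
    by (rule product_integrable_prod) (auto intro: fint)
  thus "integrable (PiM {..<n} (\<lambda>_. Gm \<sigma>)) (\<lambda>z. z i * z j)" unfolding prodf .
  have "(\<integral>z. (\<Prod>l\<in>{..<n}. f l (z l)) \<partial>PiM {..<n} (\<lambda>_. Gm \<sigma>)) = (\<Prod>l\<in>{..<n}. integral\<^sup>L (Gm \<sigma>) (f l))"
    by (rule product_integral_prod) (auto intro: fint)
  also have "\<dots> = (if i = j then \<sigma>\<^sup>2 else 0)"
  proof (cases "i = j")
    case True
    have "(\<Prod>l\<in>{..<n}. integral\<^sup>L (Gm \<sigma>) (f l)) = integral\<^sup>L (Gm \<sigma>) (f i) * (\<Prod>l\<in>{..<n}-{i}. integral\<^sup>L (Gm \<sigma>) (f l))"
      using assms by (subst prod.remove[of _ i]) auto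
    also have "(\<Prod>l\<in>{..<n}-{i}. integral\<^sup>L (Gm \<sigma>) (f l)) = 1"
      using True by (intro prod.neutral) (auto simp: f1 P.prob_space)
    moreover have "f i = (\<lambda>v. v * v)" using True by (auto simp: f_def fun_eq_iff)
    ultimately show ?thesis using True Gm_mom2[OF assms(1)] by simp
  next
    case False
    have "(\<Prod>l\<in>{..<n}. integral\<^sup>L (Gm \<sigma>) (f l)) = integral\<^sup>L (Gm \<sigma>) (f i) * (\<Prod>l\<in>{..<n}-{i}. integral\<^sup>L (Gm \<sigma>) (f l))"
      using assms by (subst prod.remove[of _ i]) auto
    also have "f i = (\<lambda>v. v)" using False by (auto simp: f_def fun_eq_iff)
    also have "integral\<^sup>L (Gm \<sigma>) (\<lambda>v. v) = 0" using Gm_mom1[OF assms(1)] by simp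
    finally show ?thesis using False by simp
  qed
  finally show "(\<integral>z. z i * z j \<partial>PiM {..<n} (\<lambda>_. Gm \<sigma>)) = (if i = j then \<sigma>\<^sup>2 else 0)"
    unfolding prodf .
qed

lemma Gm_lin:
  fixes n :: nat
  assumes "\<sigma> > 0"
  shows "integrable (PiM {..<n} (\<lambda>_. Gm \<sigma>)) (\<lambda>z. (\<Sum>j<n. c j * z j)\<^sup>2)"
        "(\<integral>z. (\<Sum>j<n. c j * z j)\<^sup>2 \<partial>PiM {..<n} (\<lambda>_. Gm \<sigma>)) = \<sigma>\<^sup>2 * (\<Sum>j<n. (c j)\<^sup>2)"
proof -
  have eq: "(\<Sum>j<n. c j * z j)\<^sup>2 = (\<Sum>i<n. \<Sum>j<n. c i * c j * (z i * z j))" for z :: "nat \<Rightarrow> real"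
    by (simp add: power2_eq_square sum_product algebra_simps)
  show "integrable (PiM {..<n} (\<lambda>_. Gm \<sigma>)) (\<lambda>z. (\<Sum>j<n. c j * z j)\<^sup>2)"
    unfolding eq by (intro Bochner_Integration.integrable_sum integrable_mult_right Gm_pair(1)[OF assms]) auto
  have "(\<integral>z. (\<Sum>j<n. c j * z j)\<^sup>2 \<partial>PiM {..<n} (\<lambda>_. Gm \<sigma>))
      = (\<Sum>i<n. \<Sum>j<n. c i * c j * (if i = j then \<sigma>\<^sup>2 else 0))"
    unfolding eq
    apply (subst Bochner_Integration.integral_sum)
     apply (intro Bochner_Integration.integrable_sum integrable_mult_right Gm_pair(1)[OF assms]; simp)
    apply (intro sum.cong refl)
    apply (subst Bochner_Integration.integral_sum)
     apply (intro integrable_mult_right Gm_pair(1)[OF assms]; simp)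
    apply (intro sum.cong refl)
    apply (simp add: Gm_pair(2)[OF assms])
    done
  also have "\<dots> = (\<Sum>i<n. c i * c i * \<sigma>\<^sup>2)"
    by (intro sum.cong refl) (simp add: if_distrib sum.delta cong: if_cong)
  also have "\<dots> = \<sigma>\<^sup>2 * (\<Sum>j<n. (c j)\<^sup>2)" by (simp add: sum_distrib_left power2_eq_square algebra_simps)
  finally show "(\<integral>z. (\<Sum>j<n. c j * z j)\<^sup>2 \<partial>PiM {..<n} (\<lambda>_. Gm \<sigma>)) = \<sigma>\<^sup>2 * (\<Sum>j<n. (c j)\<^sup>2)" .
qed

lemma distr_pair_snd':
  assumes "prob_space M1" "prob_space M2"
  shows "distr (M1 \<Otimes>\<^sub>M M2) M2 snd = M2"
proof (intro measure_eqI)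
  interpret M1: prob_space M1 by fact
  interpret M2: prob_space M2 by fact
  interpret pair_sigma_finite M1 M2 by unfold_locales
  fix A assume A: "A \<in> sets (distr (M1 \<Otimes>\<^sub>M M2) M2 snd)"
  from A have "emeasure (distr (M1 \<Otimes>\<^sub>M M2) M2 snd) A = emeasure (M1 \<Otimes>\<^sub>M M2) (space M1 \<times> A)"
    by (auto simp add: emeasure_distr space_pair_measure dest: sets.sets_into_space intro!: arg_cong2[where f=emeasure])
  also have "\<dots> = emeasure M1 (space M1) * emeasure M2 A"
    using A by (intro M2.emeasure_pair_measure_Times) auto
  finally show "emeasure (distr (M1 \<Otimes>\<^sub>M M2) M2 snd) A = emeasure M2 A"
    by (simp add: M1.emeasure_space_1)
qed simp

lemma distr_pair_fst':
  assumes "prob_space M1" "prob_space M2"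
  shows "distr (M1 \<Otimes>\<^sub>M M2) M1 fst = M1"
  using prob_space.distr_pair_fst[OF assms(2)] .


lemma mac_outs_char:
  assumes "\<And>k'. k' < k \<Longrightarrow> f1 k' w1 s (\<lambda>j. if j < k' then Yf j else 0) + f2 k' w2 s (\<lambda>j. if j < k' then Yf j else 0) + s k' + z k' = Yf k'"
  shows "mac_outs f1 f2 w1 w2 s z k = map Yf [0..<k]"
  using assms
proof (induction k)
  case 0 then show ?case by simp
next
  case (Suc k)
  have ih: "mac_outs f1 f2 w1 w2 s z k = map Yf [0..<k]" using Suc by simp
  have p: "(\<lambda>j. if j < k then map Yf [0..<k] ! j else 0) = (\<lambda>j. if j < k then Yf j else 0)"
    by (auto simp: fun_eq_iff)
  show ?case using Suc.prems[of k] by (simp add: ih Let_def p)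
qed

lemma past_out_char:
  assumes "\<And>k'. k' < k \<Longrightarrow> f1 k' w1 s (\<lambda>j. if j < k' then Yf j else 0) + f2 k' w2 s (\<lambda>j. if j < k' then Yf j else 0) + s k' + z k' = Yf k'"
  shows "past_out f1 f2 w1 w2 s z k = (\<lambda>j. if j < k then Yf j else 0)"
  using mac_outs_char[of k f1 w1 s Yf f2 w2 z, OF assms] unfolding past_out_def by (auto simp: fun_eq_iff)

context ozarow begin

definition "sig1 a m = sqrt N / a / sqrt r1 ^ m"
definition "sig2 a m = sqrt N / (a * sqrt (1 - \<rho>\<^sup>2)) / sqrt r2 ^ m"
definition "bb1 a m = sig1 a m * b1"
definition "bb2 a m = sig2 a m * sg m * b2"
definition "mu = \<rho> / sqrt (1 - \<rho>\<^sup>2)"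

definition "c1 n a s = a * (\<Sum>m<n-2. bb1 a m * s (m+2)) - s 0"
definition "c2 n a s = a * (\<Sum>m<n-2. bb2 a m * s (m+2)) - s 1"
definition "cc n a k s = (if k = 0 then c1 n a s else if k = 1 then c2 n a s else 0)"

definition th :: "nat \<Rightarrow> nat \<Rightarrow> real" where "th M w = real w / real M"

definition "yh n a s p j = p j - s j - cc n a j s"

primrec Urec :: "(nat \<Rightarrow> real) \<Rightarrow> real \<Rightarrow> nat \<Rightarrow> real" where
  "Urec yv u0 0 = u0"
| "Urec yv u0 (Suc m) = sqrt r1 * (Urec yv u0 m - b1 * yv (m+2))"

primrec Wrec :: "(nat \<Rightarrow> real) \<Rightarrow> real \<Rightarrow> nat \<Rightarrow> real" where
  "Wrec yv w0 0 = w0"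
| "Wrec yv w0 (Suc m) = sqrt r2 * (Wrec yv w0 m - sg m * b2 * yv (m+2))"

definition enc1 :: "nat \<Rightarrow> real \<Rightarrow> nat \<Rightarrow> encoder" where
  "enc1 n a M k w s p = (let yv = yh n a s p; t = th M w in
     if k = 0 then a * t + c1 n a s
     else if k = 1 then mu * (yv 0 - a * t)
     else x * Urec yv ((yv 0 - a * t) / sqrt N) (k-2))"

definition enc2 :: "nat \<Rightarrow> real \<Rightarrow> nat \<Rightarrow> encoder" where
  "enc2 n a M k w s p = (let yv = yh n a s p; t = th M w in
     if k = 0 then 0
     else if k = 1 then a * t + c2 n a s
     else sg (k-2) * y * Wrec yv ((yv 1 - a * t) * sqrt (1 - \<rho>\<^sup>2) / sqrt N) (k-2))"

definition "est1 n a yy = yy 0 / a - (\<Sum>m<n-2. bb1 a m * yy (m+2))"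
definition "est2 n a yy = yy 1 / a - (\<Sum>m<n-2. bb2 a m * yy (m+2))"
definition dec :: "nat \<Rightarrow> real \<Rightarrow> nat" where "dec M v = nat \<lfloor>real M * v + 1/2\<rfloor>"
definition "decoder n a M1 M2 yy = (dec M1 (est1 n a yy), dec M2 (est2 n a yy))"

definition "Lz n c z = (\<Sum>j<n. c j * z j)"
definition "Uv n m z = Lz n (ou m) z"
definition "Wv n m z = Lz n (ow m) z"

definition "Yv n a t1 t2 z k =
   (if k = 0 then a * t1 + z 0
    else if k = 1 then mu * z 0 + a * t2 + z 1
    else x * Uv n (k-2) z + sg (k-2) * y * Wv n (k-2) z + z k)"

definition "Yact n a t1 t2 s z k = Yv n a t1 t2 z k + s k + cc n a k s"

lemma ou_supp: "j \<ge> m + 2 \<Longrightarrow> ou m j = 0" using ovec_inv[of m] by auto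
lemma ow_supp: "j \<ge> m + 2 \<Longrightarrow> ow m j = 0" using ovec_inv[of m] by auto

lemma Lz_cy: assumes "m + 2 < n"
  shows "Lz n (cy m) z = x * Uv n m z + sg m * y * Wv n m z + z (m+2)"
proof -
  have "Lz n (cy m) z = (\<Sum>j<n. x * (ou m j * z j) + sg m * y * (ow m j * z j) + (if j = m+2 then z j else 0))"
    unfolding Lz_def cy_def cyv_def by (intro sum.cong) (auto simp: algebra_simps)
  also have "\<dots> = x * Uv n m z + sg m * y * Wv n m z + z (m+2)"
    using assms by (simp add: sum.distrib sum_distrib_left Uv_def Wv_def Lz_def)
  finally show ?thesis .
qed

lemma Uv_Suc: assumes "m + 2 < n"
  shows "Uv n (Suc m) z = sqrt r1 * (Uv n m z - b1 * Yv n a t1 t2 z (m+2))"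
proof -
  have "Uv n (Suc m) z = sqrt r1 * (Uv n m z - b1 * Lz n (cy m) z)"
    unfolding Uv_def Lz_def ou_Suc by (simp add: sum_subtractf sum_distrib_left algebra_simps)
  thus ?thesis using Lz_cy[OF assms] by (simp add: Yv_def)
qed

lemma Wv_Suc: assumes "m + 2 < n"
  shows "Wv n (Suc m) z = sqrt r2 * (Wv n m z - sg m * b2 * Yv n a t1 t2 z (m+2))"
proof -
  have "Wv n (Suc m) z = sqrt r2 * (Wv n m z - sg m * b2 * Lz n (cy m) z)"
    unfolding Wv_def Lz_def ow_Suc by (simp add: sum_subtractf sum_distrib_left algebra_simps)
  thus ?thesis using Lz_cy[OF assms] by (simp add: Yv_def)
qed

lemma Uv_0: assumes "n > 0" shows "Uv n 0 z = z 0 / sqrt N"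
proof -
  have "Uv n 0 z = (\<Sum>j<n. if j = 0 then z 0 / sqrt N else 0)"
    unfolding Uv_def Lz_def ou_def by (intro sum.cong) auto
  also have "\<dots> = z 0 / sqrt N" using assms by (simp add: sum.delta)
  finally show ?thesis .
qed

lemma Wv_0: "n > 1 \<Longrightarrow> Wv n 0 z = (mu * z 0 + z 1) * sqrt (1 - \<rho>\<^sup>2) / sqrt N"
proof -
  assume n: "n > 1"
  have "\<rho>\<^sup>2 < 1" using rho_nn rho_lt by (simp add: abs_square_less_1)
  hence q: "1 - \<rho>\<^sup>2 > 0" by simp
  have "Wv n 0 z = (\<Sum>j<n. (if j = 1 then sqrt (1 - \<rho>\<^sup>2) / sqrt N * z j else 0) + (if j = 0 then \<rho> / sqrt N * z j else 0))"
    unfolding Wv_def Lz_def ow_def by (intro sum.cong) auto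
  also have "\<dots> = sqrt (1 - \<rho>\<^sup>2) / sqrt N * z 1 + \<rho> / sqrt N * z 0"
    using n by (simp add: sum.distrib)
  also have "\<dots> = ((mu * sqrt (1 - \<rho>\<^sup>2)) * z 0 + z 1 * sqrt (1 - \<rho>\<^sup>2)) / sqrt N"
  proof -
    have mq: "mu * sqrt (1 - \<rho>\<^sup>2) = \<rho>" using q unfolding mu_def by simp
    show ?thesis unfolding mq by (simp add: add_divide_distrib)
  qed
  also have "\<dots> = (mu * z 0 + z 1) * sqrt (1 - \<rho>\<^sup>2) / sqrt N"
    by (simp add: algebra_simps)
  finally show ?thesis .
qed

lemma Urec_eq:
  assumes "\<And>j. j < m + 2 \<Longrightarrow> yv j = Yv n a t1 t2 z j" "m + 2 \<le> n"
  shows "Urec yv (z 0 / sqrt N) m = Uv n m z"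
  using assms
proof (induction m)
  case 0 thus ?case by (simp add: Uv_0)
next
  case (Suc m)
  have ih: "Urec yv (z 0 / sqrt N) m = Uv n m z" using Suc by simp
  have yy: "yv (m+2) = Yv n a t1 t2 z (m+2)" using Suc.prems(1)[of "m+2"] by simp
  have "Urec yv (z 0 / sqrt N) (Suc m) = sqrt r1 * (Uv n m z - b1 * Yv n a t1 t2 z (m+2))"
    by (simp only: Urec.simps ih yy)
  also have "\<dots> = Uv n (Suc m) z" using Uv_Suc[of m n z a t1 t2] Suc.prems(2) by simp
  finally show ?case .
qed

lemma Wrec_eq:
  assumes "\<And>j. j < m + 2 \<Longrightarrow> yv j = Yv n a t1 t2 z j" "m + 2 \<le> n"
  shows "Wrec yv ((mu * z 0 + z 1) * sqrt (1 - \<rho>\<^sup>2) / sqrt N) m = Wv n m z"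
  using assms
proof (induction m)
  case 0 thus ?case by (simp add: Wv_0)
next
  case (Suc m)
  have ih: "Wrec yv ((mu * z 0 + z 1) * sqrt (1 - \<rho>\<^sup>2) / sqrt N) m = Wv n m z" using Suc by simp
  have yy: "yv (m+2) = Yv n a t1 t2 z (m+2)" using Suc.prems(1)[of "m+2"] by simp
  have "Wrec yv ((mu * z 0 + z 1) * sqrt (1 - \<rho>\<^sup>2) / sqrt N) (Suc m) = sqrt r2 * (Wv n m z - sg m * b2 * Yv n a t1 t2 z (m+2))"
    by (simp only: Wrec.simps ih yy)
  also have "\<dots> = Wv n (Suc m) z" using Wv_Suc[of m n z a t1 t2] Suc.prems(2) by simp
  finally show ?case .
qed

lemma traj_step:
  assumes "k < n" "a \<noteq> 0"
  shows "enc1 n a M1 k w1 s (\<lambda>j. if j < k then Yact n a (th M1 w1) (th M2 w2) s z j else 0)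
       + enc2 n a M2 k w2 s (\<lambda>j. if j < k then Yact n a (th M1 w1) (th M2 w2) s z j else 0)
       + s k + z k = Yact n a (th M1 w1) (th M2 w2) s z k"
proof -
  define t1 where "t1 = th M1 w1"
  define t2 where "t2 = th M2 w2"
  define P where "P = (\<lambda>j. if j < k then Yact n a t1 t2 s z j else 0)"
  define yv where "yv = yh n a s P"
  have yv: "\<And>j. j < k \<Longrightarrow> yv j = Yv n a t1 t2 z j"
    unfolding yv_def yh_def Yact_def P_def by simp
  have E1: "enc1 n a M1 k w1 s P = (if k = 0 then a * t1 + c1 n a s
     else if k = 1 then mu * (yv 0 - a * t1)
     else x * Urec yv ((yv 0 - a * t1) / sqrt N) (k-2))"
    unfolding enc1_def Let_def yv_def t1_def ..
  have E2: "enc2 n a M2 k w2 s P = (if k = 0 then 0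
     else if k = 1 then a * t2 + c2 n a s
     else sg (k-2) * y * Wrec yv ((yv 1 - a * t2) * sqrt (1 - \<rho>\<^sup>2) / sqrt N) (k-2))"
    unfolding enc2_def Let_def yv_def t2_def ..
  have goal: "enc1 n a M1 k w1 s P + enc2 n a M2 k w2 s P + s k + z k = Yact n a t1 t2 s z k"
  proof -
    consider "k = 0" | "k = 1" | "k \<ge> 2" by linarith
    thus ?thesis
    proof cases
      case 1 thus ?thesis unfolding E1 E2 by (simp add: Yact_def Yv_def cc_def)
    next
      case 2
      have "yv 0 = a * t1 + z 0" using yv[of 0] 2 by (simp add: Yv_def)
      thus ?thesis using 2 unfolding E1 E2 by (simp add: Yact_def Yv_def cc_def)
    next
      case 3
      have y0: "yv 0 = a * t1 + z 0" using yv[of 0] 3 by (simp add: Yv_def)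
      have y1: "yv 1 = mu * z 0 + a * t2 + z 1" using yv[of 1] 3 by (simp add: Yv_def)
      have u: "Urec yv (z 0 / sqrt N) (k-2) = Uv n (k-2) z"
        by (rule Urec_eq) (use yv 3 assms in auto)
      have w: "Wrec yv ((mu * z 0 + z 1) * sqrt (1 - \<rho>\<^sup>2) / sqrt N) (k-2) = Wv n (k-2) z"
        by (rule Wrec_eq) (use yv 3 assms in auto)
      have e1: "(yv 0 - a * t1) / sqrt N = z 0 / sqrt N" using y0 by simp
      have e2: "(yv 1 - a * t2) * sqrt (1 - \<rho>\<^sup>2) / sqrt N = (mu * z 0 + z 1) * sqrt (1 - \<rho>\<^sup>2) / sqrt N"
        using y1 by simp
      show ?thesis using 3 unfolding E1 E2 e1 e2 u w
        by (simp add: Yact_def Yv_def cc_def)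
    qed
  qed
  thus ?thesis unfolding P_def t1_def t2_def .
qed

lemma past_out_eq:
  assumes "a \<noteq> 0"
  shows "past_out (enc1 n a M1) (enc2 n a M2) w1 w2 s z n = (\<lambda>j. if j < n then Yact n a (th M1 w1) (th M2 w2) s z j else 0)"
  by (rule past_out_char) (rule traj_step[OF _ assms])


lemma sqrt_r1_pos: "sqrt r1 > 0" using r1_ge by simp
lemma sqrt_r2_pos: "sqrt r2 > 0" using r2_ge by simp

lemma sig1_Suc: "sig1 a (Suc m) * sqrt r1 = sig1 a m"
  unfolding sig1_def using sqrt_r1_pos by (simp add: field_simps)
lemma sig2_Suc: "sig2 a (Suc m) * sqrt r2 = sig2 a m"
  unfolding sig2_def using sqrt_r2_pos by (simp add: field_simps)

lemma est1_virt:
  assumes "a \<noteq> 0" "M + 2 \<le> n"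
  shows "Yv n a t1 t2 z 0 / a - (\<Sum>m<M. bb1 a m * Yv n a t1 t2 z (m+2)) = t1 + sig1 a M * Uv n M z"
  using assms(2)
proof (induction M)
  case 0
  have "Uv n 0 z = z 0 / sqrt N" using 0 by (intro Uv_0) simp
  thus ?case using assms(1) N_pos by (simp add: Yv_def sig1_def field_simps)
next
  case (Suc M)
  have ih: "Yv n a t1 t2 z 0 / a - (\<Sum>m<M. bb1 a m * Yv n a t1 t2 z (m+2)) = t1 + sig1 a M * Uv n M z"
    using Suc by simp
  have "sig1 a (Suc M) * Uv n (Suc M) z = sig1 a (Suc M) * sqrt r1 * (Uv n M z - b1 * Yv n a t1 t2 z (M+2))"
    using Uv_Suc[of M n z a t1 t2] Suc.prems by simp
  also have "\<dots> = sig1 a M * Uv n M z - bb1 a M * Yv n a t1 t2 z (M+2)"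
    unfolding sig1_Suc bb1_def by (simp add: algebra_simps)
  finally show ?case using ih by simp
qed

lemma est2_virt:
  assumes "a \<noteq> 0" "M + 2 \<le> n"
  shows "Yv n a t1 t2 z 1 / a - (\<Sum>m<M. bb2 a m * Yv n a t1 t2 z (m+2)) = t2 + sig2 a M * Wv n M z"
  using assms(2)
proof (induction M)
  case 0
  have "\<rho>\<^sup>2 < 1" using rho_nn rho_lt by (simp add: abs_square_less_1)
  hence q: "sqrt (1 - \<rho>\<^sup>2) > 0" by simp
  have "Wv n 0 z = (mu * z 0 + z 1) * sqrt (1 - \<rho>\<^sup>2) / sqrt N" using 0 by (intro Wv_0) simp
  thus ?case using assms(1) N_pos q by (simp add: Yv_def sig2_def field_simps)
next
  case (Suc M)
  have ih: "Yv n a t1 t2 z 1 / a - (\<Sum>m<M. bb2 a m * Yv n a t1 t2 z (m+2)) = t2 + sig2 a M * Wv n M z"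
    using Suc by simp
  have "sig2 a (Suc M) * Wv n (Suc M) z = sig2 a (Suc M) * sqrt r2 * (Wv n M z - sg M * b2 * Yv n a t1 t2 z (M+2))"
    using Wv_Suc[of M n z a t1 t2] Suc.prems by simp
  also have "\<dots> = sig2 a M * Wv n M z - bb2 a M * Yv n a t1 t2 z (M+2)"
    unfolding sig2_Suc bb2_def by (simp add: algebra_simps)
  finally show ?case using ih by simp
qed

lemma est1_eq:
  assumes "a \<noteq> 0" "n \<ge> 2"
  shows "est1 n a (\<lambda>j. if j < n then Yact n a t1 t2 s z j else 0) = t1 + sig1 a (n-2) * Uv n (n-2) z"
proof -
  have "est1 n a (\<lambda>j. if j < n then Yact n a t1 t2 s z j else 0)
      = Yact n a t1 t2 s z 0 / a - (\<Sum>m<n-2. bb1 a m * Yact n a t1 t2 s z (m+2))"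
    unfolding est1_def using assms by (intro arg_cong2[where f="(-)"] sum.cong) auto
  also have "\<dots> = (Yv n a t1 t2 z 0 / a - (\<Sum>m<n-2. bb1 a m * Yv n a t1 t2 z (m+2)))
      + ((s 0 + c1 n a s) / a - (\<Sum>m<n-2. bb1 a m * s (m+2)))"
    unfolding Yact_def cc_def by (simp add: sum.distrib algebra_simps add_divide_distrib)
  also have "(s 0 + c1 n a s) / a - (\<Sum>m<n-2. bb1 a m * s (m+2)) = 0"
    unfolding c1_def using assms(1) by simp
  finally show ?thesis using est1_virt[OF assms(1), of "n-2" n t1 t2 z] assms by simp
qed

lemma est2_eq:
  assumes "a \<noteq> 0" "n \<ge> 2"
  shows "est2 n a (\<lambda>j. if j < n then Yact n a t1 t2 s z j else 0) = t2 + sig2 a (n-2) * Wv n (n-2) z"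
proof -
  have "est2 n a (\<lambda>j. if j < n then Yact n a t1 t2 s z j else 0)
      = Yact n a t1 t2 s z 1 / a - (\<Sum>m<n-2. bb2 a m * Yact n a t1 t2 s z (m+2))"
    unfolding est2_def using assms by (intro arg_cong2[where f="(-)"] sum.cong) auto
  also have "\<dots> = (Yv n a t1 t2 z 1 / a - (\<Sum>m<n-2. bb2 a m * Yv n a t1 t2 z (m+2)))
      + ((s 1 + c2 n a s) / a - (\<Sum>m<n-2. bb2 a m * s (m+2)))"
    unfolding Yact_def cc_def by (simp add: sum.distrib algebra_simps add_divide_distrib)
  also have "(s 1 + c2 n a s) / a - (\<Sum>m<n-2. bb2 a m * s (m+2)) = 0"
    unfolding c2_def using assms(1) by simp
  finally show ?thesis using est2_virt[OF assms(1), of "n-2" n t1 t2 z] assms by simp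
qed

lemma dec_ok: assumes "M > 0" "w \<in> {1..M}" "\<bar>e\<bar> < 1 / (2 * real M)"
  shows "dec M (th M w + e) = w"
proof -
  have "real M * (th M w + e) + 1/2 = real w + (real M * e + 1/2)"
    using assms(1) unfolding th_def by (simp add: field_simps)
  moreover have "\<bar>real M * e\<bar> < 1/2" using assms(1,3) by (simp add: abs_mult field_simps)
  ultimately have "\<lfloor>real M * (th M w + e) + 1/2\<rfloor> = int w"
    by (intro floor_unique) auto
  thus ?thesis unfolding dec_def by simp
qed

end


locale sspace =
  fixes DS :: "real measure" and \<sigma> :: real and n :: nat
  assumes DS_prob: "prob_space DS" and DS_sets: "sets DS = sets borel"
    and DS_var: "integrable DS (\<lambda>x. x\<^sup>2)" and sig_pos: "\<sigma> > 0"
begin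

lemmas DS_sets'[measurable_cong] = DS_sets

definition "SS = PiM {..<n} (\<lambda>_. DS)"
definition "GS = PiM {..<n} (\<lambda>_. Gm \<sigma>)"
definition "Om = SS \<Otimes>\<^sub>M GS"

lemma SS_prob: "prob_space SS" unfolding SS_def by (intro prob_space_PiM DS_prob)
lemma GS_prob: "prob_space GS" unfolding GS_def by (intro prob_space_PiM Gm_prob sig_pos)
lemma Om_prob: "prob_space Om" unfolding Om_def by (intro prob_space_pair SS_prob GS_prob)

lemma distr_snd: "distr Om GS snd = GS"
  unfolding Om_def by (rule distr_pair_snd'[OF SS_prob GS_prob])
lemma distr_fst: "distr Om SS fst = SS"
  unfolding Om_def by (rule distr_pair_fst'[OF SS_prob GS_prob])

lemma snd_meas[measurable]: "snd \<in> measurable Om GS" unfolding Om_def by simp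
lemma fst_meas[measurable]: "fst \<in> measurable Om SS" unfolding Om_def by simp

lemma sets_SS[measurable_cong]: "sets SS = sets (PiM {..<n} (\<lambda>_. borel))"
  unfolding SS_def by (intro sets_PiM_cong) (auto simp: DS_sets)
lemma sets_GS[measurable_cong]: "sets GS = sets (PiM {..<n} (\<lambda>_. borel))"
  unfolding GS_def by (intro sets_PiM_cong) auto

lemma lin_meas[measurable]: "(\<lambda>z. \<Sum>j<n. c j * z j) \<in> borel_measurable GS"
  by measurable

lemma nnZ: "(\<integral>\<^sup>+\<omega>. ennreal ((\<Sum>j<n. c j * snd \<omega> j)\<^sup>2) \<partial>Om) = ennreal (\<sigma>\<^sup>2 * (\<Sum>j<n. (c j)\<^sup>2))"
proof -
  have "(\<integral>\<^sup>+\<omega>. ennreal ((\<Sum>j<n. c j * snd \<omega> j)\<^sup>2) \<partial>Om) = (\<integral>\<^sup>+z. ennreal ((\<Sum>j<n. c j * z j)\<^sup>2) \<partial>distr Om GS snd)"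
    by (subst nn_integral_distr) auto
  also have "\<dots> = (\<integral>\<^sup>+z. ennreal ((\<Sum>j<n. c j * z j)\<^sup>2) \<partial>GS)" unfolding distr_snd ..
  also have "\<dots> = ennreal (\<integral>z. (\<Sum>j<n. c j * z j)\<^sup>2 \<partial>GS)"
    using Gm_lin(1)[OF sig_pos, of n c] unfolding GS_def[symmetric]
    by (intro nn_integral_eq_integral) auto
  also have "\<dots> = ennreal (\<sigma>\<^sup>2 * (\<Sum>j<n. (c j)\<^sup>2))"
    using Gm_lin(2)[OF sig_pos, of n c] unfolding GS_def by simp
  finally show ?thesis .
qed

lemma chebZ:
  assumes "\<delta> > 0"
  shows "measure Om {\<omega>\<in>space Om. \<bar>\<Sum>j<n. c j * snd \<omega> j\<bar> \<ge> \<delta>} \<le> \<sigma>\<^sup>2 * (\<Sum>j<n. (c j)\<^sup>2) / \<delta>\<^sup>2"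
proof -
  interpret P: prob_space Om by (rule Om_prob)
  have int: "integrable Om (\<lambda>\<omega>. (\<Sum>j<n. c j * snd \<omega> j) ^ 2)"
  proof -
    have "integrable (distr Om GS snd) (\<lambda>z. (\<Sum>j<n. c j * z j) ^ 2)"
      unfolding distr_snd unfolding GS_def using Gm_lin(1)[OF sig_pos, of n c] by simp
    thus ?thesis by (subst (asm) integrable_distr_eq) auto
  qed
  have "(\<integral>\<omega>. (\<Sum>j<n. c j * snd \<omega> j) ^ 2 \<partial>Om) = (\<integral>z. (\<Sum>j<n. c j * z j) ^ 2 \<partial>distr Om GS snd)"
    by (subst integral_distr) auto
  also have "\<dots> = \<sigma>\<^sup>2 * (\<Sum>j<n. (c j)\<^sup>2)" unfolding distr_snd unfolding GS_def using Gm_lin(2)[OF sig_pos, of n c] by simp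
  finally have eq: "(\<integral>\<omega>. (\<Sum>j<n. c j * snd \<omega> j) ^ 2 \<partial>Om) = \<sigma>\<^sup>2 * (\<Sum>j<n. (c j)\<^sup>2)" .
  have "measure Om {\<omega>\<in>space Om. \<bar>\<Sum>j<n. c j * snd \<omega> j\<bar> \<ge> \<delta>} \<le> (\<integral>\<omega>. (\<Sum>j<n. c j * snd \<omega> j) ^ 2 \<partial>Om) / \<delta>\<^sup>2"
    by (rule P.second_moment_method) (use int assms in auto)
  thus ?thesis unfolding eq .
qed

definition "E2 = (\<integral>x. x\<^sup>2 \<partial>DS)"

lemma comp_meas: assumes "j < n" shows "(\<lambda>s. s j) \<in> borel_measurable SS"
proof -
  have "(\<lambda>s. s j) \<in> measurable SS DS" unfolding SS_def using assms by simp
  thus ?thesis using measurable_cong_sets[OF refl DS_sets] by blast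
qed

lemma nn_s2: assumes "j < n" shows "(\<integral>\<^sup>+\<omega>. ennreal ((fst \<omega> j)\<^sup>2) \<partial>Om) = ennreal E2"
proof -
  note comp_meas[OF assms, measurable]
  have m2[measurable]: "(\<lambda>v::real. v^2) \<in> borel_measurable DS"
    by (subst measurable_cong_sets[OF DS_sets refl]) simp
  have "(\<integral>\<^sup>+\<omega>. ennreal ((fst \<omega> j)\<^sup>2) \<partial>Om) = (\<integral>\<^sup>+s. ennreal ((s j)\<^sup>2) \<partial>distr Om SS fst)"
    by (subst nn_integral_distr) auto
  also have "\<dots> = (\<integral>\<^sup>+s. ennreal ((s j)\<^sup>2) \<partial>SS)" unfolding distr_fst ..
  also have "\<dots> = (\<integral>\<^sup>+v. ennreal (v\<^sup>2) \<partial>distr SS DS (\<lambda>s. s j))"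
    by (subst nn_integral_distr) (auto simp: SS_def assms)
  also have "distr SS DS (\<lambda>s. s j) = DS"
    unfolding SS_def using assms DS_prob by (intro distr_PiM_component) auto
  also have "(\<integral>\<^sup>+v. ennreal (v\<^sup>2) \<partial>DS) = ennreal E2"
    unfolding E2_def using DS_var by (intro nn_integral_eq_integral) auto
  finally show ?thesis .
qed

lemma E2_nn: "E2 \<ge> 0" unfolding E2_def by simp

lemma cs_bound:
  fixes w v :: "nat \<Rightarrow> real"
  shows "(\<Sum>m<K. w m * v m)\<^sup>2 \<le> (\<Sum>m<K. \<bar>w m\<bar>) * (\<Sum>m<K. \<bar>w m\<bar> * (v m)\<^sup>2)"
proof -
  have "(\<Sum>m<K. w m * v m)\<^sup>2 = (\<Sum>m<K. sqrt \<bar>w m\<bar> * (sqrt \<bar>w m\<bar> * sgn (w m) * v m))\<^sup>2"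
    by (intro arg_cong[where f="\<lambda>t. t\<^sup>2"] sum.cong refl)
       (metis abs_mult_sgn abs_of_nonneg mult.assoc mult.commute real_sqrt_abs2 real_sqrt_mult sqrt_ge_absD abs_ge_zero real_sqrt_mult_self)
  also have "\<dots> \<le> (\<Sum>m<K. (sqrt \<bar>w m\<bar>)\<^sup>2) * (\<Sum>m<K. (sqrt \<bar>w m\<bar> * sgn (w m) * v m)\<^sup>2)"
    by (rule Cauchy_Schwarz_ineq_sum)
  also have "\<dots> = (\<Sum>m<K. \<bar>w m\<bar>) * (\<Sum>m<K. \<bar>w m\<bar> * (v m)\<^sup>2)"
    by (intro arg_cong2[where f="(*)"] sum.cong refl) (auto simp: power_mult_distrib sgn_if)
  finally show ?thesis .
qed


lemma fst_comp_meas[measurable]: assumes "j < n" shows "(\<lambda>\<omega>. fst \<omega> j) \<in> borel_measurable Om"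
  using comp_meas[OF assms] fst_meas by (rule measurable_compose[rotated])

lemma nnS:
  assumes "K + 2 \<le> n" "i0 < n"
  shows "(\<integral>\<^sup>+\<omega>. ennreal ((A + (\<Sum>m<K. w m * fst \<omega> (m+2)) - fst \<omega> i0)\<^sup>2) \<partial>Om)
     \<le> ennreal (3 * A\<^sup>2 + 3 * E2 + 3 * (\<Sum>m<K. \<bar>w m\<bar>)\<^sup>2 * E2)"
proof -
  interpret P: prob_space Om by (rule Om_prob)
  define W where "W = (\<Sum>m<K. \<bar>w m\<bar>)"
  have W0: "W \<ge> 0" unfolding W_def by (simp add: sum_nonneg)
  have pt: "(A + (\<Sum>m<K. w m * fst \<omega> (m+2)) - fst \<omega> i0)\<^sup>2
      \<le> 3 * A\<^sup>2 + 3 * (fst \<omega> i0)\<^sup>2 + (\<Sum>m<K. 3 * W * \<bar>w m\<bar> * (fst \<omega> (m+2))\<^sup>2)" for \<omega>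
  proof -
    define T where "T = (\<Sum>m<K. w m * fst \<omega> (m+2))"
    have "T\<^sup>2 \<le> W * (\<Sum>m<K. \<bar>w m\<bar> * (fst \<omega> (m+2))\<^sup>2)"
      unfolding T_def W_def by (rule cs_bound)
    also have "W * (\<Sum>m<K. \<bar>w m\<bar> * (fst \<omega> (m+2))\<^sup>2) = (\<Sum>m<K. W * \<bar>w m\<bar> * (fst \<omega> (m+2))\<^sup>2)"
      by (simp add: sum_distrib_left mult.assoc)
    finally have T2: "T\<^sup>2 \<le> (\<Sum>m<K. W * \<bar>w m\<bar> * (fst \<omega> (m+2))\<^sup>2)" .
    have "(A + T - fst \<omega> i0)\<^sup>2 \<le> 3 * A\<^sup>2 + 3 * T\<^sup>2 + 3 * (fst \<omega> i0)\<^sup>2"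
    proof -
      have "3 * A\<^sup>2 + 3 * T\<^sup>2 + 3 * (fst \<omega> i0)\<^sup>2 - (A + T - fst \<omega> i0)\<^sup>2
          = (A - T)\<^sup>2 + (A + fst \<omega> i0)\<^sup>2 + (T + fst \<omega> i0)\<^sup>2"
        by (simp add: power2_eq_square algebra_simps)
      moreover have "(A - T)\<^sup>2 + (A + fst \<omega> i0)\<^sup>2 + (T + fst \<omega> i0)\<^sup>2 \<ge> 0" by simp
      ultimately show ?thesis by linarith
    qed
    also have "\<dots> \<le> 3 * A\<^sup>2 + 3 * (\<Sum>m<K. W * \<bar>w m\<bar> * (fst \<omega> (m+2))\<^sup>2) + 3 * (fst \<omega> i0)\<^sup>2"
      using T2 by simp
    finally show ?thesis unfolding T_def by (simp add: sum_distrib_left mult.assoc)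
  qed
  have "(\<integral>\<^sup>+\<omega>. ennreal ((A + (\<Sum>m<K. w m * fst \<omega> (m+2)) - fst \<omega> i0)\<^sup>2) \<partial>Om)
     \<le> (\<integral>\<^sup>+\<omega>. ennreal (3 * A\<^sup>2) + ennreal 3 * ennreal ((fst \<omega> i0)\<^sup>2)
           + (\<Sum>m<K. ennreal (3 * W * \<bar>w m\<bar>) * ennreal ((fst \<omega> (m+2))\<^sup>2)) \<partial>Om)"
  proof (intro nn_integral_mono)
    fix \<omega>
    have "ennreal ((A + (\<Sum>m<K. w m * fst \<omega> (m+2)) - fst \<omega> i0)\<^sup>2)
       \<le> ennreal (3 * A\<^sup>2 + 3 * (fst \<omega> i0)\<^sup>2 + (\<Sum>m<K. 3 * W * \<bar>w m\<bar> * (fst \<omega> (m+2))\<^sup>2))"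
      using pt by (rule ennreal_leI)
    also have "\<dots> = ennreal (3 * A\<^sup>2) + ennreal 3 * ennreal ((fst \<omega> i0)\<^sup>2)
           + (\<Sum>m<K. ennreal (3 * W * \<bar>w m\<bar>) * ennreal ((fst \<omega> (m+2))\<^sup>2))"
    proof -
      have e3: "ennreal (3 * t) = 3 * ennreal t" for t by (subst ennreal_mult') auto
      show ?thesis using W0 by (simp add: e3 ennreal_plus sum_nonneg ennreal_mult[symmetric] flip: sum_ennreal)
    qed
    finally show "ennreal ((A + (\<Sum>m<K. w m * fst \<omega> (m+2)) - fst \<omega> i0)\<^sup>2)
       \<le> ennreal (3 * A\<^sup>2) + ennreal 3 * ennreal ((fst \<omega> i0)\<^sup>2)
           + (\<Sum>m<K. ennreal (3 * W * \<bar>w m\<bar>) * ennreal ((fst \<omega> (m+2))\<^sup>2))" .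
  qed
  also have "\<dots> = ennreal (3 * A\<^sup>2) + ennreal 3 * ennreal E2 + (\<Sum>m<K. ennreal (3 * W * \<bar>w m\<bar>) * ennreal E2)"
  proof -
    have m0: "(\<lambda>\<omega>. fst \<omega> i0) \<in> borel_measurable Om" using assms by (intro fst_comp_meas) simp
    have mm: "m < K \<Longrightarrow> (\<lambda>\<omega>. fst \<omega> (m+2)) \<in> borel_measurable Om" for m using assms by (intro fst_comp_meas) simp
    have "(\<integral>\<^sup>+\<omega>. ennreal (3 * A\<^sup>2) + ennreal 3 * ennreal ((fst \<omega> i0)\<^sup>2)
           + (\<Sum>m<K. ennreal (3 * W * \<bar>w m\<bar>) * ennreal ((fst \<omega> (m+2))\<^sup>2)) \<partial>Om)
      = (\<integral>\<^sup>+\<omega>. ennreal (3 * A\<^sup>2) \<partial>Om) + (\<integral>\<^sup>+\<omega>. ennreal 3 * ennreal ((fst \<omega> i0)\<^sup>2) \<partial>Om)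
         + (\<integral>\<^sup>+\<omega>. (\<Sum>m<K. ennreal (3 * W * \<bar>w m\<bar>) * ennreal ((fst \<omega> (m+2))\<^sup>2)) \<partial>Om)"
      using m0 mm by (simp add: nn_integral_add)
    also have "(\<integral>\<^sup>+\<omega>. ennreal 3 * ennreal ((fst \<omega> i0)\<^sup>2) \<partial>Om) = ennreal 3 * ennreal E2"
      using m0 nn_s2[of i0] assms by (simp add: nn_integral_cmult)
    also have "(\<integral>\<^sup>+\<omega>. (\<Sum>m<K. ennreal (3 * W * \<bar>w m\<bar>) * ennreal ((fst \<omega> (m+2))\<^sup>2)) \<partial>Om)
        = (\<Sum>m<K. ennreal (3 * W * \<bar>w m\<bar>) * ennreal E2)"
    proof -
      have "(\<integral>\<^sup>+\<omega>. (\<Sum>m<K. ennreal (3 * W * \<bar>w m\<bar>) * ennreal ((fst \<omega> (m+2))\<^sup>2)) \<partial>Om)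
        = (\<Sum>m<K. (\<integral>\<^sup>+\<omega>. ennreal (3 * W * \<bar>w m\<bar>) * ennreal ((fst \<omega> (m+2))\<^sup>2) \<partial>Om))"
        by (rule nn_integral_sum) (use mm in auto)
      also have "\<dots> = (\<Sum>m<K. ennreal (3 * W * \<bar>w m\<bar>) * ennreal E2)"
      proof (intro sum.cong refl)
        fix m assume "m \<in> {..<K}"
        hence m: "m < K" by simp
        have "(\<integral>\<^sup>+\<omega>. ennreal (3 * W * \<bar>w m\<bar>) * ennreal ((fst \<omega> (m+2))\<^sup>2) \<partial>Om)
           = ennreal (3 * W * \<bar>w m\<bar>) * (\<integral>\<^sup>+\<omega>. ennreal ((fst \<omega> (m+2))\<^sup>2) \<partial>Om)"
          by (rule nn_integral_cmult) (use mm[OF m] in auto)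
        also have "(\<integral>\<^sup>+\<omega>. ennreal ((fst \<omega> (m+2))\<^sup>2) \<partial>Om) = ennreal E2"
          by (rule nn_s2) (use m assms in auto)
        finally show "(\<integral>\<^sup>+\<omega>. ennreal (3 * W * \<bar>w m\<bar>) * ennreal ((fst \<omega> (m+2))\<^sup>2) \<partial>Om)
           = ennreal (3 * W * \<bar>w m\<bar>) * ennreal E2" .
      qed
      finally show ?thesis .
    qed
    finally show ?thesis by (simp add: P.emeasure_space_1)
  qed
  also have "\<dots> = ennreal (3 * A\<^sup>2 + 3 * E2 + 3 * W\<^sup>2 * E2)"
  proof -
    have "(\<Sum>m<K. ennreal (3 * W * \<bar>w m\<bar>) * ennreal E2) = ennreal (\<Sum>m<K. 3 * W * \<bar>w m\<bar> * E2)"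
      using W0 E2_nn by (simp add: ennreal_mult[symmetric] sum_nonneg flip: sum_ennreal)
    also have "(\<Sum>m<K. 3 * W * \<bar>w m\<bar> * E2) = 3 * W\<^sup>2 * E2"
      unfolding W_def by (simp add: sum_distrib_left sum_distrib_right power2_eq_square algebra_simps)
    moreover have "ennreal (3 * A\<^sup>2) + ennreal 3 * ennreal E2 + ennreal (3 * W\<^sup>2 * E2) = ennreal (3 * A\<^sup>2 + 3 * E2 + 3 * W\<^sup>2 * E2)"
      using W0 E2_nn by (simp add: ennreal_mult[symmetric] ennreal_plus[symmetric] del: ennreal_plus ennreal_numeral)
    ultimately show ?thesis by simp
  qed
  finally show ?thesis unfolding W_def .
qed

end


lemma pair_count_meas:
  fixes f :: "'a \<Rightarrow> nat" and g :: "'a \<Rightarrow> nat"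
  assumes "f \<in> measurable M (count_space UNIV)" "g \<in> measurable M (count_space UNIV)"
  shows "(\<lambda>x. (f x, g x)) \<in> measurable M (count_space UNIV)"
proof -
  have "(\<lambda>x. (f x, g x)) -` {(u, v)} \<inter> space M = (f -` {u} \<inter> space M) \<inter> (g -` {v} \<inter> space M)" for u v
    by auto
  moreover have "f -` {u} \<inter> space M \<in> sets M" "g -` {v} \<inter> space M \<in> sets M" for u v
    using assms by (auto simp: measurable_count_space_eq2_countable)
  ultimately show ?thesis by (auto simp: measurable_count_space_eq2_countable)
qed

context ozarow begin

abbreviation "MM \<equiv> (PiM UNIV (\<lambda>_::nat. borel :: real measure) \<Otimes>\<^sub>M PiM UNIV (\<lambda>_::nat. borel :: real measure))"

lemma Urec_meas:
  assumes "\<And>j. (\<lambda>\<omega>. yv \<omega> j) \<in> borel_measurable M" "u0 \<in> borel_measurable M"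
  shows "(\<lambda>\<omega>. Urec (yv \<omega>) (u0 \<omega>) m) \<in> borel_measurable M"
  by (induction m) (use assms in auto)

lemma Wrec_meas:
  assumes "\<And>j. (\<lambda>\<omega>. yv \<omega> j) \<in> borel_measurable M" "u0 \<in> borel_measurable M"
  shows "(\<lambda>\<omega>. Wrec (yv \<omega>) (u0 \<omega>) m) \<in> borel_measurable M"
  by (induction m) (use assms in auto)

lemma c1_meas[measurable]: "(\<lambda>\<omega>. c1 n a (fst \<omega>)) \<in> borel_measurable MM"
  unfolding c1_def by measurable
lemma c2_meas[measurable]: "(\<lambda>\<omega>. c2 n a (fst \<omega>)) \<in> borel_measurable MM"
  unfolding c2_def by measurable

lemma yh_meas: "(\<lambda>\<omega>. yh n a (fst \<omega>) (snd \<omega>) j) \<in> borel_measurable MM"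
  unfolding yh_def cc_def by measurable

lemma enc1_meas: "(\<lambda>(s, p). enc1 n a M k w s p) \<in> borel_measurable MM"
proof -
  have "(\<lambda>\<omega>. enc1 n a M k w (fst \<omega>) (snd \<omega>)) \<in> borel_measurable MM"
  proof (cases "k = 0 \<or> k = 1")
    case True thus ?thesis unfolding enc1_def Let_def using yh_meas by auto
  next
    case False
    hence "(\<lambda>\<omega>. enc1 n a M k w (fst \<omega>) (snd \<omega>)) = (\<lambda>\<omega>. x * Urec (yh n a (fst \<omega>) (snd \<omega>)) ((yh n a (fst \<omega>) (snd \<omega>) 0 - a * th M w) / sqrt N) (k-2))"
      unfolding enc1_def Let_def by auto
    moreover have "(\<lambda>\<omega>. Urec (yh n a (fst \<omega>) (snd \<omega>)) ((yh n a (fst \<omega>) (snd \<omega>) 0 - a * th M w) / sqrt N) (k-2)) \<in> borel_measurable MM"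
      by (rule Urec_meas) (use yh_meas in auto)
    ultimately show ?thesis by simp
  qed
  thus ?thesis by (simp add: case_prod_beta')
qed

lemma enc2_meas: "(\<lambda>(s, p). enc2 n a M k w s p) \<in> borel_measurable MM"
proof -
  have "(\<lambda>\<omega>. enc2 n a M k w (fst \<omega>) (snd \<omega>)) \<in> borel_measurable MM"
  proof (cases "k = 0 \<or> k = 1")
    case True thus ?thesis unfolding enc2_def Let_def using yh_meas by auto
  next
    case False
    hence "(\<lambda>\<omega>. enc2 n a M k w (fst \<omega>) (snd \<omega>)) = (\<lambda>\<omega>. sg (k-2) * y * Wrec (yh n a (fst \<omega>) (snd \<omega>)) ((yh n a (fst \<omega>) (snd \<omega>) 1 - a * th M w) * sqrt (1 - \<rho>\<^sup>2) / sqrt N) (k-2))"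
      unfolding enc2_def Let_def by auto
    moreover have "(\<lambda>\<omega>. Wrec (yh n a (fst \<omega>) (snd \<omega>)) ((yh n a (fst \<omega>) (snd \<omega>) 1 - a * th M w) * sqrt (1 - \<rho>\<^sup>2) / sqrt N) (k-2)) \<in> borel_measurable MM"
      by (rule Wrec_meas) (use yh_meas in auto)
    ultimately show ?thesis by simp
  qed
  thus ?thesis by (simp add: case_prod_beta')
qed

lemma dec_meas: assumes "f \<in> borel_measurable M'" shows "(\<lambda>v. dec K (f v)) \<in> measurable M' (count_space UNIV)"
proof -
  have h: "(\<lambda>v. real K * f v + 1/2) \<in> borel_measurable M'" using assms by simp
  have "(\<lambda>v. \<lfloor>real K * f v + 1/2\<rfloor>) \<in> measurable M' (count_space UNIV)"
    using measurable_compose[OF h measurable_real_floor] by simp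
  hence "(\<lambda>v. nat \<lfloor>real K * f v + 1/2\<rfloor>) \<in> measurable M' (count_space UNIV)"
    by (rule measurable_compose) simp
  thus ?thesis unfolding dec_def .
qed

lemma decoder_meas: "decoder n a M1 M2 \<in> measurable (PiM UNIV (\<lambda>_::nat. borel :: real measure)) (count_space UNIV)"
proof -
  have e1: "est1 n a \<in> borel_measurable (PiM UNIV (\<lambda>_::nat. borel :: real measure))"
    unfolding est1_def[abs_def] by measurable
  have e2: "est2 n a \<in> borel_measurable (PiM UNIV (\<lambda>_::nat. borel :: real measure))"
    unfolding est2_def[abs_def] by measurable
  show ?thesis unfolding decoder_def[abs_def]
    by (intro pair_count_meas dec_meas e1 e2)
qed

lemma code_meas: "measurable_code (enc1 n a M1) (enc2 n a M2) (decoder n a M1 M2)"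
  unfolding measurable_code_def using enc1_meas enc2_meas decoder_meas by blast

end


lemma sum_split2: fixes n :: nat shows "n \<ge> 2 \<Longrightarrow> (\<Sum>k<n. f k) = f 0 + f 1 + (\<Sum>m<n-2. f (m+2))"
proof -
  assume "n \<ge> 2"
  then obtain m where n: "n = Suc (Suc m)" by (metis add_2_eq_Suc le_Suc_ex)
  show ?thesis unfolding n
    by (subst sum.lessThan_Suc_shift, subst sum.lessThan_Suc_shift) (simp add: algebra_simps)
qed

locale full = sspace DS \<sigma> n + ozarow "\<sigma>\<^sup>2" x y \<rho> for DS \<sigma> n x y \<rho>
begin

lemma enc1_val:
  assumes "k < n" "a \<noteq> 0"
  shows "enc1 n a M1 k w1 s (\<lambda>j. if j < k then Yact n a (th M1 w1) (th M2 w2) s z j else 0)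
    = (if k = 0 then a * th M1 w1 + c1 n a s else if k = 1 then mu * z 0 else x * Uv n (k-2) z)"
proof -
  define t1 where "t1 = th M1 w1"
  define t2 where "t2 = th M2 w2"
  define P where "P = (\<lambda>j. if j < k then Yact n a t1 t2 s z j else 0)"
  define yv where "yv = yh n a s P"
  have yv: "\<And>j. j < k \<Longrightarrow> yv j = Yv n a t1 t2 z j"
    unfolding yv_def yh_def Yact_def P_def by simp
  have E1: "enc1 n a M1 k w1 s P = (if k = 0 then a * t1 + c1 n a s
     else if k = 1 then mu * (yv 0 - a * t1)
     else x * Urec yv ((yv 0 - a * t1) / sqrt (\<sigma>\<^sup>2)) (k-2))"
    unfolding enc1_def Let_def yv_def t1_def ..
  have "enc1 n a M1 k w1 s P = (if k = 0 then a * t1 + c1 n a s else if k = 1 then mu * z 0 else x * Uv n (k-2) z)"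
  proof -
    consider "k = 0" | "k = 1" | "k \<ge> 2" by linarith
    thus ?thesis
    proof cases
      case 1 thus ?thesis unfolding E1 by simp
    next
      case 2
      have "yv 0 = a * t1 + z 0" using yv[of 0] 2 by (simp add: Yv_def)
      thus ?thesis using 2 unfolding E1 by simp
    next
      case 3
      have y0: "yv 0 = a * t1 + z 0" using yv[of 0] 3 by (simp add: Yv_def)
      have u: "Urec yv (z 0 / sqrt (\<sigma>\<^sup>2)) (k-2) = Uv n (k-2) z"
        by (rule Urec_eq) (use yv 3 assms in auto)
      have e1: "(yv 0 - a * t1) / sqrt (\<sigma>\<^sup>2) = z 0 / sqrt (\<sigma>\<^sup>2)" using y0 by simp
      show ?thesis using 3 unfolding E1 e1 u by simp
    qed
  qed
  thus ?thesis unfolding P_def t1_def t2_def .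
qed

lemma enc2_val:
  assumes "k < n" "a \<noteq> 0"
  shows "enc2 n a M2 k w2 s (\<lambda>j. if j < k then Yact n a (th M1 w1) (th M2 w2) s z j else 0)
    = (if k = 0 then 0 else if k = 1 then a * th M2 w2 + c2 n a s else sg (k-2) * y * Wv n (k-2) z)"
proof -
  define t1 where "t1 = th M1 w1"
  define t2 where "t2 = th M2 w2"
  define P where "P = (\<lambda>j. if j < k then Yact n a t1 t2 s z j else 0)"
  define yv where "yv = yh n a s P"
  have yv: "\<And>j. j < k \<Longrightarrow> yv j = Yv n a t1 t2 z j"
    unfolding yv_def yh_def Yact_def P_def by simp
  have E2: "enc2 n a M2 k w2 s P = (if k = 0 then 0
     else if k = 1 then a * t2 + c2 n a s
     else sg (k-2) * y * Wrec yv ((yv 1 - a * t2) * sqrt (1 - \<rho>\<^sup>2) / sqrt (\<sigma>\<^sup>2)) (k-2))"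
    unfolding enc2_def Let_def yv_def t2_def ..
  have "enc2 n a M2 k w2 s P = (if k = 0 then 0 else if k = 1 then a * t2 + c2 n a s else sg (k-2) * y * Wv n (k-2) z)"
  proof -
    consider "k = 0 \<or> k = 1" | "k \<ge> 2" by linarith
    thus ?thesis
    proof cases
      case 1 thus ?thesis unfolding E2 by auto
    next
      case 2
      have y1: "yv 1 = mu * z 0 + a * t2 + z 1" using yv[of 1] 2 by (simp add: Yv_def)
      have w: "Wrec yv ((mu * z 0 + z 1) * sqrt (1 - \<rho>\<^sup>2) / sqrt (\<sigma>\<^sup>2)) (k-2) = Wv n (k-2) z"
        by (rule Wrec_eq) (use yv 2 assms in auto)
      have e2: "(yv 1 - a * t2) * sqrt (1 - \<rho>\<^sup>2) / sqrt (\<sigma>\<^sup>2) = (mu * z 0 + z 1) * sqrt (1 - \<rho>\<^sup>2) / sqrt (\<sigma>\<^sup>2)"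
        using y1 by simp
      show ?thesis using 2 unfolding E2 e2 w by simp
    qed
  qed
  thus ?thesis unfolding P_def t1_def t2_def .
qed

lemma past_out_k:
  assumes "k \<le> n" "a \<noteq> 0"
  shows "past_out (enc1 n a M1) (enc2 n a M2) w1 w2 s z k = (\<lambda>j. if j < k then Yact n a (th M1 w1) (th M2 w2) s z j else 0)"
  by (rule past_out_char) (rule traj_step, use assms in auto)

lemma ou_norm: assumes "m + 2 \<le> n" shows "\<sigma>\<^sup>2 * (\<Sum>j<n. (ou m j)\<^sup>2) = 1"
proof -
  have "(\<Sum>j<n. (ou m j)\<^sup>2) = (\<Sum>j<n. ou m j * ou m j)" by (simp add: power2_eq_square)
  also have "\<dots> = (\<Sum>j<m+2. ou m j * ou m j)"
    by (rule sum.mono_neutral_right) (use assms ou_supp in auto)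
  finally have "(\<Sum>j<n. (ou m j)\<^sup>2) = (\<Sum>j<m+2. ou m j * ou m j)" .
  thus ?thesis using ovec_inv[of m] unfolding ip_def by simp
qed

lemma ow_norm: assumes "m + 2 \<le> n" shows "\<sigma>\<^sup>2 * (\<Sum>j<n. (ow m j)\<^sup>2) = 1"
proof -
  have "(\<Sum>j<n. (ow m j)\<^sup>2) = (\<Sum>j<n. ow m j * ow m j)" by (simp add: power2_eq_square)
  also have "\<dots> = (\<Sum>j<m+2. ow m j * ow m j)"
    by (rule sum.mono_neutral_right) (use assms ow_supp in auto)
  finally have "(\<Sum>j<n. (ow m j)\<^sup>2) = (\<Sum>j<m+2. ow m j * ow m j)" .
  thus ?thesis using ovec_inv[of m] unfolding ip_def by simp
qed


lemma nnZ_x: assumes "m + 2 \<le> n"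
  shows "(\<integral>\<^sup>+\<omega>. ennreal ((x * Uv n m (snd \<omega>))\<^sup>2) \<partial>Om) = ennreal (x\<^sup>2)"
proof -
  have "(\<integral>\<^sup>+\<omega>. ennreal ((x * Uv n m (snd \<omega>))\<^sup>2) \<partial>Om) = (\<integral>\<^sup>+\<omega>. ennreal ((\<Sum>j<n. (x * ou m j) * snd \<omega> j)\<^sup>2) \<partial>Om)"
    unfolding Uv_def Lz_def by (simp add: sum_distrib_left mult.assoc)
  also have "\<dots> = ennreal (\<sigma>\<^sup>2 * (\<Sum>j<n. (x * ou m j)\<^sup>2))" by (rule nnZ)
  also have "\<sigma>\<^sup>2 * (\<Sum>j<n. (x * ou m j)\<^sup>2) = x\<^sup>2 * (\<sigma>\<^sup>2 * (\<Sum>j<n. (ou m j)\<^sup>2))"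
    by (simp add: power_mult_distrib sum_distrib_left algebra_simps)
  finally show ?thesis using ou_norm[OF assms] by simp
qed

lemma nnZ_y: assumes "m + 2 \<le> n"
  shows "(\<integral>\<^sup>+\<omega>. ennreal ((sg m * y * Wv n m (snd \<omega>))\<^sup>2) \<partial>Om) = ennreal (y\<^sup>2)"
proof -
  have sg2: "(sg m)\<^sup>2 = 1" using sg_sq[of m] by (simp add: power2_eq_square)
  have "(\<integral>\<^sup>+\<omega>. ennreal ((sg m * y * Wv n m (snd \<omega>))\<^sup>2) \<partial>Om) = (\<integral>\<^sup>+\<omega>. ennreal ((\<Sum>j<n. (sg m * y * ow m j) * snd \<omega> j)\<^sup>2) \<partial>Om)"
    unfolding Wv_def Lz_def by (simp add: sum_distrib_left mult.assoc)
  also have "\<dots> = ennreal (\<sigma>\<^sup>2 * (\<Sum>j<n. (sg m * y * ow m j)\<^sup>2))" by (rule nnZ)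
  also have "\<sigma>\<^sup>2 * (\<Sum>j<n. (sg m * y * ow m j)\<^sup>2) = (sg m)\<^sup>2 * y\<^sup>2 * (\<sigma>\<^sup>2 * (\<Sum>j<n. (ow m j)\<^sup>2))"
    by (simp add: power_mult_distrib sum_distrib_left algebra_simps)
  finally show ?thesis using ow_norm[OF assms] sg2 by simp
qed

lemma nnZ_mu: assumes "n \<ge> 2"
  shows "(\<integral>\<^sup>+\<omega>. ennreal ((mu * snd \<omega> 0)\<^sup>2) \<partial>Om) = ennreal (\<sigma>\<^sup>2 * mu\<^sup>2)"
proof -
  have "(\<integral>\<^sup>+\<omega>. ennreal ((mu * snd \<omega> 0)\<^sup>2) \<partial>Om) = (\<integral>\<^sup>+\<omega>. ennreal ((\<Sum>j<n. (if j = 0 then mu else 0) * snd \<omega> j)\<^sup>2) \<partial>Om)"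
  proof -
    have "(\<Sum>j<n. (if j = 0 then mu else 0) * z j) = mu * z 0" for z :: "nat \<Rightarrow> real"
    proof -
      have "(\<Sum>j<n. (if j = 0 then mu else 0) * z j) = (\<Sum>j<n. if j = 0 then mu * z 0 else 0)"
        by (intro sum.cong) auto
      thus ?thesis using assms by simp
    qed
    thus ?thesis by simp
  qed
  also have "\<dots> = ennreal (\<sigma>\<^sup>2 * (\<Sum>j<n. (if j = 0 then mu else 0)\<^sup>2))" by (rule nnZ)
  also have "(\<Sum>j<n. (if j = 0 then mu else (0::real))\<^sup>2) = mu\<^sup>2"
  proof -
    have "(\<Sum>j<n. (if j = 0 then mu else (0::real))\<^sup>2) = (\<Sum>j<n. if j = 0 then mu\<^sup>2 else 0)"
      by (intro sum.cong) auto
    thus ?thesis using assms by simp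
  qed
  finally show ?thesis .
qed

lemma mac1_val:
  assumes "k < n" "a \<noteq> 0"
  shows "mac_input (enc1 n a M1) (enc1 n a M1) (enc2 n a M2) w1 w1 w2 s z k
    = (if k = 0 then a * th M1 w1 + c1 n a s else if k = 1 then mu * z 0 else x * Uv n (k-2) z)"
  unfolding mac_input_def using assms by (simp add: past_out_k enc1_val)

lemma mac2_val:
  assumes "k < n" "a \<noteq> 0"
  shows "mac_input (enc2 n a M2) (enc1 n a M1) (enc2 n a M2) w2 w1 w2 s z k
    = (if k = 0 then 0 else if k = 1 then a * th M2 w2 + c2 n a s else sg (k-2) * y * Wv n (k-2) z)"
  unfolding mac_input_def using assms by (simp add: past_out_k enc2_val)

lemma energy1:
  assumes n2: "n \<ge> 2" and a: "a > 0" and t: "0 \<le> th M1 w1" "th M1 w1 \<le> 1"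
    and B: "(\<Sum>m<n-2. \<bar>a * bb1 a m\<bar>) \<le> B1"
  shows "(\<Sum>k<n. \<integral>\<^sup>+\<omega>. ennreal ((mac_input (enc1 n a M1) (enc1 n a M1) (enc2 n a M2) w1 w1 w2 (fst \<omega>) (snd \<omega>) k)\<^sup>2) \<partial>Om)
     \<le> ennreal (3 * a\<^sup>2 + 3 * E2 + 3 * B1\<^sup>2 * E2 + \<sigma>\<^sup>2 * mu\<^sup>2 + real (n-2) * x\<^sup>2)"
proof -
  let ?F = "\<lambda>k. \<integral>\<^sup>+\<omega>. ennreal ((mac_input (enc1 n a M1) (enc1 n a M1) (enc2 n a M2) w1 w1 w2 (fst \<omega>) (snd \<omega>) k)\<^sup>2) \<partial>Om"
  have F0: "?F 0 \<le> ennreal (3 * a\<^sup>2 + 3 * E2 + 3 * B1\<^sup>2 * E2)"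
  proof -
    have "?F 0 = (\<integral>\<^sup>+\<omega>. ennreal ((a * th M1 w1 + (\<Sum>m<n-2. (a * bb1 a m) * fst \<omega> (m+2)) - fst \<omega> 0)\<^sup>2) \<partial>Om)"
      using n2 a by (simp add: mac1_val c1_def sum_distrib_left mult.assoc add_diff_eq)
    also have "\<dots> \<le> ennreal (3 * (a * th M1 w1)\<^sup>2 + 3 * E2 + 3 * (\<Sum>m<n-2. \<bar>a * bb1 a m\<bar>)\<^sup>2 * E2)"
      by (rule nnS) (use n2 in auto)
    also have "\<dots> \<le> ennreal (3 * a\<^sup>2 + 3 * E2 + 3 * B1\<^sup>2 * E2)"
    proof (intro ennreal_leI)
      have h1: "(a * th M1 w1)\<^sup>2 \<le> a\<^sup>2" using t a by (simp add: power_mult_distrib mult_le_cancel_left1 power_le_one)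
      have "0 \<le> (\<Sum>m<n-2. \<bar>a * bb1 a m\<bar>)" by (simp add: sum_nonneg)
      hence h2: "(\<Sum>m<n-2. \<bar>a * bb1 a m\<bar>)\<^sup>2 \<le> B1\<^sup>2" using B by (intro power_mono) auto
      have "(\<Sum>m<n-2. \<bar>a * bb1 a m\<bar>)\<^sup>2 * E2 \<le> B1\<^sup>2 * E2" using h2 E2_nn by (rule mult_right_mono)
      thus "3 * (a * th M1 w1)\<^sup>2 + 3 * E2 + 3 * (\<Sum>m<n-2. \<bar>a * bb1 a m\<bar>)\<^sup>2 * E2 \<le> 3 * a\<^sup>2 + 3 * E2 + 3 * B1\<^sup>2 * E2"
        using h1 by linarith
    qed
    finally show ?thesis .
  qed
  have F1: "?F 1 = ennreal (\<sigma>\<^sup>2 * mu\<^sup>2)"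
    using n2 a nnZ_mu by (simp add: mac1_val)
  have Fm: "?F (m+2) = ennreal (x\<^sup>2)" if "m < n-2" for m
    using that a nnZ_x[of m] by (simp add: mac1_val)
  have "(\<Sum>k<n. ?F k) = ?F 0 + ?F 1 + (\<Sum>m<n-2. ?F (m+2))" by (rule sum_split2[OF n2])
  also have "(\<Sum>m<n-2. ?F (m+2)) = (\<Sum>m<n-2. ennreal (x\<^sup>2))" by (intro sum.cong refl Fm) simp
  also have "\<dots> = ennreal (real (n-2) * x\<^sup>2)" by (simp add: ennreal_mult ennreal_of_nat_eq_real_of_nat)
  finally have "(\<Sum>k<n. ?F k) = ?F 0 + ennreal (\<sigma>\<^sup>2 * mu\<^sup>2) + ennreal (real (n-2) * x\<^sup>2)" unfolding F1 .
  also have "\<dots> \<le> ennreal (3 * a\<^sup>2 + 3 * E2 + 3 * B1\<^sup>2 * E2) + ennreal (\<sigma>\<^sup>2 * mu\<^sup>2) + ennreal (real (n-2) * x\<^sup>2)"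
    using F0 by (intro add_mono order_refl)
  also have "\<dots> = ennreal (3 * a\<^sup>2 + 3 * E2 + 3 * B1\<^sup>2 * E2 + \<sigma>\<^sup>2 * mu\<^sup>2 + real (n-2) * x\<^sup>2)"
    using E2_nn by (simp add: ennreal_plus[symmetric] del: ennreal_plus)
  finally show ?thesis .
qed

lemma energy2:
  assumes n2: "n \<ge> 2" and a: "a > 0" and t: "0 \<le> th M2 w2" "th M2 w2 \<le> 1"
    and B: "(\<Sum>m<n-2. \<bar>a * bb2 a m\<bar>) \<le> B2"
  shows "(\<Sum>k<n. \<integral>\<^sup>+\<omega>. ennreal ((mac_input (enc2 n a M2) (enc1 n a M1) (enc2 n a M2) w2 w1 w2 (fst \<omega>) (snd \<omega>) k)\<^sup>2) \<partial>Om)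
     \<le> ennreal (3 * a\<^sup>2 + 3 * E2 + 3 * B2\<^sup>2 * E2 + real (n-2) * y\<^sup>2)"
proof -
  let ?F = "\<lambda>k. \<integral>\<^sup>+\<omega>. ennreal ((mac_input (enc2 n a M2) (enc1 n a M1) (enc2 n a M2) w2 w1 w2 (fst \<omega>) (snd \<omega>) k)\<^sup>2) \<partial>Om"
  have F1: "?F 1 \<le> ennreal (3 * a\<^sup>2 + 3 * E2 + 3 * B2\<^sup>2 * E2)"
  proof -
    have "?F 1 = (\<integral>\<^sup>+\<omega>. ennreal ((a * th M2 w2 + (\<Sum>m<n-2. (a * bb2 a m) * fst \<omega> (m+2)) - fst \<omega> 1)\<^sup>2) \<partial>Om)"
      using n2 a by (simp add: mac2_val c2_def sum_distrib_left mult.assoc add_diff_eq)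
    also have "\<dots> \<le> ennreal (3 * (a * th M2 w2)\<^sup>2 + 3 * E2 + 3 * (\<Sum>m<n-2. \<bar>a * bb2 a m\<bar>)\<^sup>2 * E2)"
      by (rule nnS) (use n2 in auto)
    also have "\<dots> \<le> ennreal (3 * a\<^sup>2 + 3 * E2 + 3 * B2\<^sup>2 * E2)"
    proof (intro ennreal_leI)
      have h1: "(a * th M2 w2)\<^sup>2 \<le> a\<^sup>2" using t a by (simp add: power_mult_distrib mult_le_cancel_left1 power_le_one)
      have "0 \<le> (\<Sum>m<n-2. \<bar>a * bb2 a m\<bar>)" by (simp add: sum_nonneg)
      hence h2: "(\<Sum>m<n-2. \<bar>a * bb2 a m\<bar>)\<^sup>2 \<le> B2\<^sup>2" using B by (intro power_mono) auto
      have "(\<Sum>m<n-2. \<bar>a * bb2 a m\<bar>)\<^sup>2 * E2 \<le> B2\<^sup>2 * E2" using h2 E2_nn by (rule mult_right_mono)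
      thus "3 * (a * th M2 w2)\<^sup>2 + 3 * E2 + 3 * (\<Sum>m<n-2. \<bar>a * bb2 a m\<bar>)\<^sup>2 * E2 \<le> 3 * a\<^sup>2 + 3 * E2 + 3 * B2\<^sup>2 * E2"
        using h1 by linarith
    qed
    finally show ?thesis .
  qed
  have F0: "?F 0 = 0"
    using n2 a by (simp add: mac2_val)
  have Fm: "?F (m+2) = ennreal (y\<^sup>2)" if "m < n-2" for m
    using that a nnZ_y[of m] by (simp add: mac2_val)
  have "(\<Sum>k<n. ?F k) = ?F 0 + ?F 1 + (\<Sum>m<n-2. ?F (m+2))" by (rule sum_split2[OF n2])
  also have "(\<Sum>m<n-2. ?F (m+2)) = (\<Sum>m<n-2. ennreal (y\<^sup>2))" by (intro sum.cong refl Fm) simp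
  also have "\<dots> = ennreal (real (n-2) * y\<^sup>2)" by (simp add: ennreal_mult ennreal_of_nat_eq_real_of_nat)
  finally have "(\<Sum>k<n. ?F k) = ?F 1 + ennreal (real (n-2) * y\<^sup>2)" unfolding F0 by simp
  also have "\<dots> \<le> ennreal (3 * a\<^sup>2 + 3 * E2 + 3 * B2\<^sup>2 * E2) + ennreal (real (n-2) * y\<^sup>2)"
    using F1 by (intro add_mono order_refl)
  also have "\<dots> = ennreal (3 * a\<^sup>2 + 3 * E2 + 3 * B2\<^sup>2 * E2 + real (n-2) * y\<^sup>2)"
    using E2_nn by (simp add: ennreal_plus[symmetric] del: ennreal_plus)
  finally show ?thesis .
qed


lemma linOm_meas: "(\<lambda>\<omega>. \<Sum>j<n. c j * snd \<omega> j) \<in> borel_measurable Om"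
  using measurable_compose[OF snd_meas lin_meas] by simp

lemma err_bound:
  assumes n2: "n \<ge> 2" and a: "a > 0" and M: "M1 > 0" "M2 > 0" and w: "w1 \<in> {1..M1}" "w2 \<in> {1..M2}"
  shows "measure Om {\<omega> \<in> space Om. decoder n a M1 M2 (past_out (enc1 n a M1) (enc2 n a M2) w1 w2 (fst \<omega>) (snd \<omega>) n) \<noteq> (w1, w2)}
     \<le> 4 * (real M1)\<^sup>2 * (sig1 a (n-2))\<^sup>2 + 4 * (real M2)\<^sup>2 * (sig2 a (n-2))\<^sup>2"
proof -
  interpret P: prob_space Om by (rule Om_prob)
  define c1v where "c1v j = sig1 a (n-2) * ou (n-2) j" for j
  define c2v where "c2v j = sig2 a (n-2) * ow (n-2) j" for j
  define d1 where "d1 = 1 / (2 * real M1)"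
  define d2 where "d2 = 1 / (2 * real M2)"
  have d1p: "d1 > 0" and d2p: "d2 > 0" using M unfolding d1_def d2_def by auto
  define A1 where "A1 = {\<omega> \<in> space Om. \<bar>\<Sum>j<n. c1v j * snd \<omega> j\<bar> \<ge> d1}"
  define A2 where "A2 = {\<omega> \<in> space Om. \<bar>\<Sum>j<n. c2v j * snd \<omega> j\<bar> \<ge> d2}"
  have A1s: "A1 \<in> sets Om" unfolding A1_def using linOm_meas[of c1v] by measurable
  have A2s: "A2 \<in> sets Om" unfolding A2_def using linOm_meas[of c2v] by measurable
  have e1: "sig1 a (n-2) * Uv n (n-2) z = (\<Sum>j<n. c1v j * z j)" for z
    unfolding Uv_def Lz_def c1v_def by (simp add: sum_distrib_left mult.assoc)
  have e2: "sig2 a (n-2) * Wv n (n-2) z = (\<Sum>j<n. c2v j * z j)" for z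
    unfolding Wv_def Lz_def c2v_def by (simp add: sum_distrib_left mult.assoc)
  have dec_eq: "decoder n a M1 M2 (past_out (enc1 n a M1) (enc2 n a M2) w1 w2 s z n)
      = (dec M1 (th M1 w1 + (\<Sum>j<n. c1v j * z j)), dec M2 (th M2 w2 + (\<Sum>j<n. c2v j * z j)))" for s z
    using a n2 unfolding decoder_def past_out_eq[of a n M1 M2 w1 w2 s z, OF less_imp_neq[OF a, symmetric]]
    by (simp add: est1_eq est2_eq e1 e2)
  have sub: "{\<omega> \<in> space Om. decoder n a M1 M2 (past_out (enc1 n a M1) (enc2 n a M2) w1 w2 (fst \<omega>) (snd \<omega>) n) \<noteq> (w1, w2)}
      \<subseteq> A1 \<union> A2"
  proof
    fix \<omega> assume \<omega>: "\<omega> \<in> {\<omega> \<in> space Om. decoder n a M1 M2 (past_out (enc1 n a M1) (enc2 n a M2) w1 w2 (fst \<omega>) (snd \<omega>) n) \<noteq> (w1, w2)}"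
    show "\<omega> \<in> A1 \<union> A2"
    proof (rule ccontr)
      assume "\<omega> \<notin> A1 \<union> A2"
      hence l1: "\<bar>\<Sum>j<n. c1v j * snd \<omega> j\<bar> < 1 / (2 * real M1)" and l2: "\<bar>\<Sum>j<n. c2v j * snd \<omega> j\<bar> < 1 / (2 * real M2)"
        using \<omega> unfolding A1_def A2_def d1_def d2_def by auto
      have "decoder n a M1 M2 (past_out (enc1 n a M1) (enc2 n a M2) w1 w2 (fst \<omega>) (snd \<omega>) n) = (w1, w2)"
        unfolding dec_eq using dec_ok[OF M(1) w(1) l1] dec_ok[OF M(2) w(2) l2] by simp
      thus False using \<omega> by simp
    qed
  qed
  have "measure Om {\<omega> \<in> space Om. decoder n a M1 M2 (past_out (enc1 n a M1) (enc2 n a M2) w1 w2 (fst \<omega>) (snd \<omega>) n) \<noteq> (w1, w2)}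
      \<le> measure Om (A1 \<union> A2)"
    using sub A1s A2s by (intro P.finite_measure_mono) auto
  also have "\<dots> \<le> measure Om A1 + measure Om A2"
    using A1s A2s by (intro measure_Un_le) auto
  also have "measure Om A1 \<le> \<sigma>\<^sup>2 * (\<Sum>j<n. (c1v j)\<^sup>2) / d1\<^sup>2"
    unfolding A1_def by (rule chebZ[OF d1p])
  also have "\<sigma>\<^sup>2 * (\<Sum>j<n. (c1v j)\<^sup>2) = (sig1 a (n-2))\<^sup>2 * (\<sigma>\<^sup>2 * (\<Sum>j<n. (ou (n-2) j)\<^sup>2))"
    unfolding c1v_def by (simp add: power_mult_distrib sum_distrib_left algebra_simps)
  also have "\<sigma>\<^sup>2 * (\<Sum>j<n. (ou (n-2) j)\<^sup>2) = 1" using n2 by (intro ou_norm) simp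
  also have "measure Om A2 \<le> \<sigma>\<^sup>2 * (\<Sum>j<n. (c2v j)\<^sup>2) / d2\<^sup>2"
    unfolding A2_def by (rule chebZ[OF d2p])
  also have "\<sigma>\<^sup>2 * (\<Sum>j<n. (c2v j)\<^sup>2) = (sig2 a (n-2))\<^sup>2 * (\<sigma>\<^sup>2 * (\<Sum>j<n. (ow (n-2) j)\<^sup>2))"
    unfolding c2v_def by (simp add: power_mult_distrib sum_distrib_left algebra_simps)
  also have "\<sigma>\<^sup>2 * (\<Sum>j<n. (ow (n-2) j)\<^sup>2) = 1" using n2 by (intro ow_norm) simp
  finally show ?thesis unfolding d1_def d2_def using M by (simp add: power_divide field_simps)
qed

end

context ozarow begin

lemma b1_r1: "b1 \<noteq> 0 \<Longrightarrow> r1 > 1"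
proof (rule ccontr)
  assume b: "b1 \<noteq> 0" and "\<not> r1 > 1"
  hence "r1 = 1" using r1_ge by simp
  have "\<rho>\<^sup>2 < 1" using rho_nn rho_lt by (simp add: abs_square_less_1)
  hence q: "1 - \<rho>\<^sup>2 > 0" by simp
  from \<open>r1 = 1\<close> have "x\<^sup>2 * (1 - \<rho>\<^sup>2) / N = 0" unfolding r1_def by simp
  hence "x = 0" using q N_pos by simp
  hence "N * (N + y\<^sup>2 * (1 - \<rho>\<^sup>2)) = N * (y\<^sup>2 + N)" using fixp by simp
  hence "N * (y\<^sup>2 * \<rho>\<^sup>2) = 0" by (simp add: algebra_simps)
  hence "\<rho> * y = 0" using N_pos by (auto simp: power_mult_distrib[symmetric])
  hence "b1 = 0" unfolding b1_def using \<open>x = 0\<close> by simp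
  thus False using b by simp
qed

lemma b2_r2: "b2 \<noteq> 0 \<Longrightarrow> r2 > 1"
proof (rule ccontr)
  assume b: "b2 \<noteq> 0" and "\<not> r2 > 1"
  hence "r2 = 1" using r2_ge by simp
  have "\<rho>\<^sup>2 < 1" using rho_nn rho_lt by (simp add: abs_square_less_1)
  hence q: "1 - \<rho>\<^sup>2 > 0" by simp
  from \<open>r2 = 1\<close> have "y\<^sup>2 * (1 - \<rho>\<^sup>2) / N = 0" unfolding r2_def by simp
  hence "y = 0" using q N_pos by simp
  hence "(N + x\<^sup>2 * (1 - \<rho>\<^sup>2)) * N = N * (x\<^sup>2 + N)" using fixp by simp
  hence "N * (x\<^sup>2 * \<rho>\<^sup>2) = 0" by (simp add: algebra_simps)
  hence "\<rho> * x = 0" using N_pos by (auto simp: power_mult_distrib[symmetric])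
  hence "b2 = 0" unfolding b2_def using \<open>y = 0\<close> by simp
  thus False using b by simp
qed

lemma geo_bound:
  fixes q c :: real assumes "0 \<le> q" "q < 1" "c \<ge> 0"
  shows "(\<Sum>m<K. c * q ^ m) \<le> c / (1 - q)"
proof -
  have "(\<Sum>m<K. q ^ m) = (1 - q ^ K) / (1 - q)" using assms by (simp add: sum_gp_strict)
  also have "\<dots> \<le> 1 / (1 - q)" using assms by (intro divide_right_mono) auto
  finally show ?thesis using assms by (simp add: sum_distrib_left[symmetric] divide_right_mono mult_left_mono)
      (metis mult_left_mono times_divide_eq_right mult_1_right)
qed

lemma bb_gen:
  fixes b r c :: real
  assumes "b \<noteq> 0 \<Longrightarrow> r > 1" "r \<ge> 1" "c \<ge> 0"
  shows "\<exists>B. \<forall>K. (\<Sum>m<K. c * \<bar>b\<bar> * (1 / sqrt r) ^ m) \<le> B"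
proof (cases "b = 0")
  case True thus ?thesis by (intro exI[of _ 0]) simp
next
  case False
  hence r: "r > 1" using assms by simp
  have "0 \<le> 1 / sqrt r" "1 / sqrt r < 1" using r by auto
  thus ?thesis using assms by (intro exI[of _ "c * \<bar>b\<bar> / (1 - 1 / sqrt r)"] allI geo_bound) auto
qed

lemma bb1_bound: "\<exists>B. \<forall>a>0. \<forall>K. (\<Sum>m<K. \<bar>a * bb1 a m\<bar>) \<le> B"
proof -
  obtain B where B: "\<forall>K. (\<Sum>m<K. sqrt N * \<bar>b1\<bar> * (1 / sqrt r1) ^ m) \<le> B"
    using bb_gen[of b1 r1 "sqrt N"] b1_r1 r1_ge N_pos by auto
  have "\<bar>a * bb1 a m\<bar> = sqrt N * \<bar>b1\<bar> * (1 / sqrt r1) ^ m" if "a > 0" for a m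
    using that r1_ge N_pos unfolding bb1_def sig1_def by (simp add: abs_mult power_one_over field_simps)
  thus ?thesis using B by (intro exI[of _ B]) auto
qed

lemma bb2_bound: "\<exists>B. \<forall>a>0. \<forall>K. (\<Sum>m<K. \<bar>a * bb2 a m\<bar>) \<le> B"
proof -
  have "\<rho>\<^sup>2 < 1" using rho_nn rho_lt by (simp add: abs_square_less_1)
  hence q: "sqrt (1 - \<rho>\<^sup>2) > 0" by simp
  obtain B where B: "\<forall>K. (\<Sum>m<K. (sqrt N / sqrt (1 - \<rho>\<^sup>2)) * \<bar>b2\<bar> * (1 / sqrt r2) ^ m) \<le> B"
    using bb_gen[of b2 r2 "sqrt N / sqrt (1 - \<rho>\<^sup>2)"] b2_r2 r2_ge N_pos q by auto
  have sg: "\<bar>sg m\<bar> = 1" for m unfolding sg_def by simp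
  have "\<bar>a * bb2 a m\<bar> = (sqrt N / sqrt (1 - \<rho>\<^sup>2)) * \<bar>b2\<bar> * (1 / sqrt r2) ^ m" if "a > 0" for a m
    using that r2_ge N_pos q sg[of m] unfolding bb2_def sig2_def by (simp add: abs_mult power_one_over field_simps)
  thus ?thesis using B by (intro exI[of _ B]) auto
qed

lemma sig1_sq: "a > 0 \<Longrightarrow> (sig1 a m)\<^sup>2 = N / (a\<^sup>2 * r1 ^ m)"
proof -
  assume a: "a > 0"
  have "(sqrt r1 ^ m)\<^sup>2 = r1 ^ m" using r1_ge by (simp add: power_mult[symmetric] mult.commute[of m] power_mult)
  thus ?thesis unfolding sig1_def using N_pos a by (simp add: power_divide power_mult_distrib)
qed

lemma sig2_sq: "a > 0 \<Longrightarrow> (sig2 a m)\<^sup>2 = N / (a\<^sup>2 * (1 - \<rho>\<^sup>2) * r2 ^ m)"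
proof -
  assume a: "a > 0"
  have "\<rho>\<^sup>2 < 1" using rho_nn rho_lt by (simp add: abs_square_less_1)
  hence q: "1 - \<rho>\<^sup>2 > 0" by simp
  have "(sqrt r2 ^ m)\<^sup>2 = r2 ^ m" using r2_ge by (simp add: power_mult[symmetric] mult.commute[of m] power_mult)
  thus ?thesis unfolding sig2_def using N_pos q a by (simp add: power_divide power_mult_distrib)
qed

end


lemma ev_sqrt:
  fixes \<epsilon> C :: real assumes "\<epsilon> > 0" "C \<ge> 0"
  shows "eventually (\<lambda>n. 3 * sqrt (real n) + C \<le> real n * \<epsilon>) sequentially"
proof (rule eventually_sequentiallyI)
  define K where "K = (3 + C) / \<epsilon>"
  have K: "K > 0" unfolding K_def using assms by simp
  fix n :: nat assume n: "nat \<lceil>K\<^sup>2\<rceil> + 1 \<le> n"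
  have "K\<^sup>2 \<le> real n" using n by linarith
  hence sK: "K \<le> sqrt (real n)" using K by (metis real_le_rsqrt)
  have "1 \<le> real n" using n by linarith
  hence s1: "1 \<le> sqrt (real n)" by simp
  have "3 * sqrt (real n) + C \<le> 3 * sqrt (real n) + C * sqrt (real n)" using s1 assms by (simp add: mult_left_mono[of 1 _ C, simplified])
  also have "\<dots> = sqrt (real n) * (K * \<epsilon>)" unfolding K_def using assms by (simp add: field_simps)
  also have "\<dots> \<le> sqrt (real n) * (sqrt (real n) * \<epsilon>)" using sK assms by (intro mult_left_mono mult_right_mono) auto
  also have "\<dots> = real n * \<epsilon>" by (simp add: mult.assoc[symmetric])
  finally show "3 * sqrt (real n) + C \<le> real n * \<epsilon>" .
qed

lemma msgs_ge1: "num_msgs R n \<ge> 1"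
proof -
  have "2 powr (real n * R) > 0" by simp
  hence "\<lceil>2 powr (real n * R)\<rceil> \<ge> 1" by (simp add: one_le_ceiling)
  thus ?thesis unfolding num_msgs_def by linarith
qed

lemma msgs_pos: "num_msgs R n > 0"
  unfolding num_msgs_def by (simp add: zero_less_nat_eq)

lemma msgs_le: assumes "R \<ge> 0" shows "real (num_msgs R n) \<le> 2 * 2 powr (real n * R)"
proof -
  have g: "2 powr (real n * R) \<ge> 1" using assms by (simp add: ge_one_powr_ge_zero)
  have "real (num_msgs R n) = real_of_int \<lceil>2 powr (real n * R)\<rceil>"
    unfolding num_msgs_def by simp
  also have "\<dots> \<le> 2 powr (real n * R) + 1" by linarith
  finally show ?thesis using g by simp
qed

lemma pow_R: assumes "r \<ge> 1" "R = 1/2 * log 2 r"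
  shows "(2 powr (real n * R))\<^sup>2 = r ^ n"
proof -
  have "(2 powr (real n * R))\<^sup>2 = 2 powr (real n * (2 * R))"
    by (simp add: power2_eq_square powr_add[symmetric] algebra_simps)
  also have "2 * R = log 2 r" using assms by simp
  also have "2 powr (real n * log 2 r) = (2 powr (log 2 r)) powr real n"
    by (simp add: powr_powr mult.commute)
  also have "2 powr (log 2 r) = r" using assms by simp
  also have "r powr real n = r ^ n" using assms by (simp add: powr_realpow)
  finally show ?thesis .
qed

lemma alg_t2: fixes p q s r N :: real
  shows "p > 0 \<Longrightarrow> q > 0 \<Longrightarrow> s > 0 \<Longrightarrow> 4 * (4 * (r\<^sup>2 * p)) * (N / (s * q * p)) = 16 * N * r\<^sup>2 / q / s"
  by (simp add: field_simps)

lemma lim_inv_sqrt: "(\<lambda>n. K / sqrt (real n)) \<longlonglongrightarrow> 0"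
proof -
  have "(\<lambda>n::nat. 1 / sqrt (real n)) \<longlonglongrightarrow> 0" by real_asymp
  from tendsto_mult_right_zero[OF this, of K] show ?thesis by simp
qed

lemma ss_eq: "sspace DS \<sigma> \<Longrightarrow> sample_space DS \<sigma> n = sspace.Om DS \<sigma> n"
  by (simp add: sample_space_def sspace.Om_def sspace.SS_def sspace.GS_def Gm_def)


lemma trivial_case:
  assumes "R1 = 0" "R2 = 0"
  shows "achievable DS sigmaZ P1 P2 R1 R2"
proof -
  have M: "num_msgs 0 n = 1" for n unfolding num_msgs_def by simp
  let ?f = "\<lambda>(n::nat) (k::nat) (w::nat) (s::nat \<Rightarrow> real) (p::nat \<Rightarrow> real). 0::real"
  let ?g = "\<lambda>(n::nat) (y::nat \<Rightarrow> real). (1::nat, 1::nat)"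
  have mc: "measurable_code (?f n) (?f n) (?g n)" for n
    unfolding measurable_code_def by simp
  have en: "total_energy DS sigmaZ n M1 M2 (?f n) (?f n) (?f n) b = 0" for n M1 M2 b
    unfolding total_energy_def mac_input_def by simp
  have er: "error_prob DS sigmaZ n 1 1 (?f n) (?f n) (?g n) = 0" for n
    unfolding error_prob_def by simp
  have er2: "error_prob DS sigmaZ n (Suc 0) (Suc 0) (?f n) (?f n) (?g n) = 0" for n
    unfolding error_prob_def by simp
  have lim: "(\<lambda>n. error_prob DS sigmaZ n 1 1 (?f n) (?f n) (?g n)) \<longlonglongrightarrow> 0"
    unfolding er by simp
  show ?thesis unfolding achievable_def assms M
    apply (intro exI[of _ ?f] exI[of _ ?g] conjI allI impI mc)
     apply (simp add: en)
    apply (rule lim)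
    done
qed

theorem mainTheorem5:
  fixes DS :: "real measure" and sigmaZ P1 P2 \<rho> R1 R2 :: real
  assumes DS_prob: "prob_space DS"
      and DS_sets: "sets DS = sets borel"
      and DS_var: "integrable DS (\<lambda>x. x\<^sup>2)"
      and DS_mean: "integrable DS (\<lambda>x. x)" "(\<integral>x. x \<partial>DS) = 0"
      and sigmaZ_pos: "sigmaZ > 0"
      and P1: "P1 \<ge> 0" and P2: "P2 \<ge> 0"
      and rho: "0 \<le> \<rho>" "\<rho> \<le> 1"
      and R1: "R1 = 1/2 * log 2 (1 + P1 * (1 - \<rho>\<^sup>2) / sigmaZ\<^sup>2)"
      and R2: "R2 = 1/2 * log 2 (1 + P2 * (1 - \<rho>\<^sup>2) / sigmaZ\<^sup>2)"
      and Rsum: "R1 + R2 = 1/2 * log 2 (1 + (P1 + P2 + 2 * \<rho> * sqrt (P1 * P2)) / sigmaZ\<^sup>2)"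
  shows "achievable DS sigmaZ P1 P2 R1 R2"
proof (cases "\<rho> < 1 \<and> P1 + P2 > 0")
  case False
  hence "\<rho> = 1 \<or> (P1 = 0 \<and> P2 = 0)" using rho P1 P2 by auto
  hence "R1 = 0 \<and> R2 = 0" unfolding R1 R2 by auto
  thus ?thesis using trivial_case by blast
next
  case True
  hence rlt: "\<rho> < 1" and Ppos: "P1 + P2 > 0" by auto
  define x where "x = sqrt P1"
  define y where "y = sqrt P2"
  have x2: "x\<^sup>2 = P1" unfolding x_def using P1 by simp
  have y2: "y\<^sup>2 = P2" unfolding y_def using P2 by simp
  have xy: "sqrt (P1 * P2) = x * y" unfolding x_def y_def by (simp add: real_sqrt_mult)
  have x0: "x \<ge> 0" and y0: "y \<ge> 0" unfolding x_def y_def using P1 P2 by auto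
  have N0: "sigmaZ\<^sup>2 > 0" using sigmaZ_pos by simp
  have "\<rho>\<^sup>2 \<le> 1" using rho by (simp add: power_le_one)
  hence q0: "1 - \<rho>\<^sup>2 \<ge> 0" by simp
  define r1 where "r1 = 1 + P1 * (1 - \<rho>\<^sup>2) / sigmaZ\<^sup>2"
  define r2 where "r2 = 1 + P2 * (1 - \<rho>\<^sup>2) / sigmaZ\<^sup>2"
  define VV where "VV = 1 + (P1 + P2 + 2 * \<rho> * sqrt (P1 * P2)) / sigmaZ\<^sup>2"
  have r1p: "r1 > 0" and r2p: "r2 > 0" unfolding r1_def r2_def using P1 P2 q0 N0 by (auto intro!: add_pos_nonneg)
  have VVp: "VV > 0" unfolding VV_def using P1 P2 rho N0 by (auto intro!: add_pos_nonneg)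
  have "log 2 (r1 * r2) = log 2 VV"
    using Rsum r1p r2p unfolding R1 R2 r1_def[symmetric] r2_def[symmetric] VV_def[symmetric]
    by (simp add: log_mult)
  hence "2 powr (log 2 (r1 * r2)) = 2 powr (log 2 VV)" by simp
  hence "r1 * r2 = VV" using r1p r2p VVp by simp
  hence rv: "r1 * r2 = VV" .
  have e1: "r1 * r2 * (sigmaZ\<^sup>2 * sigmaZ\<^sup>2) = (sigmaZ\<^sup>2 + P1 * (1 - \<rho>\<^sup>2)) * (sigmaZ\<^sup>2 + P2 * (1 - \<rho>\<^sup>2))"
    unfolding r1_def r2_def using N0 by (simp add: field_simps)
  have e2: "VV * (sigmaZ\<^sup>2 * sigmaZ\<^sup>2) = sigmaZ\<^sup>2 * (P1 + P2 + 2 * \<rho> * sqrt (P1 * P2) + sigmaZ\<^sup>2)"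
    unfolding VV_def using N0 by (simp add: field_simps)
  have fixp: "(sigmaZ\<^sup>2 + x\<^sup>2 * (1 - \<rho>\<^sup>2)) * (sigmaZ\<^sup>2 + y\<^sup>2 * (1 - \<rho>\<^sup>2)) = sigmaZ\<^sup>2 * (x\<^sup>2 + y\<^sup>2 + 2*\<rho>*x*y + sigmaZ\<^sup>2)"
    using e1 e2 rv unfolding x2 y2 xy by (simp add: mult.assoc)
  interpret O: ozarow "sigmaZ\<^sup>2" x y \<rho>
    by unfold_locales (use N0 x0 y0 rho rlt fixp Ppos x2 y2 P1 P2 in auto)
  have SS: "sspace DS sigmaZ" unfolding sspace_def using DS_prob DS_sets DS_var sigmaZ_pos by blast
  have F: "full DS sigmaZ x y \<rho>" unfolding full_def using SS O.ozarow_axioms by simp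
  have r1e: "O.r1 = r1" unfolding O.r1_def r1_def x2 ..
  have r2e: "O.r2 = r2" unfolding O.r2_def r2_def y2 ..
  have R1r: "R1 = 1/2 * log 2 O.r1" unfolding r1e R1 r1_def ..
  have R2r: "R2 = 1/2 * log 2 O.r2" unfolding r2e R2 r2_def ..
  have R1nn: "R1 \<ge> 0" unfolding R1r using O.r1_ge by simp
  have R2nn: "R2 \<ge> 0" unfolding R2r using O.r2_ge by simp
  obtain B1 where B1: "\<forall>a>0. \<forall>K. (\<Sum>m<K. \<bar>a * O.bb1 a m\<bar>) \<le> B1" using O.bb1_bound by blast
  obtain B2 where B2: "\<forall>a>0. \<forall>K. (\<Sum>m<K. \<bar>a * O.bb2 a m\<bar>) \<le> B2" using O.bb2_bound by blast
  have B1nn: "B1 \<ge> 0" using B1[rule_format, of 1 0] by simp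
  have B2nn: "B2 \<ge> 0" using B2[rule_format, of 1 0] by simp
  define an where "an n = sqrt (sqrt (real n))" for n :: nat
  have an_pos: "n \<ge> 2 \<Longrightarrow> an n > 0" for n unfolding an_def by simp
  have an_sq: "(an n)\<^sup>2 = sqrt (real n)" for n unfolding an_def by simp
  define M1 where "M1 n = num_msgs R1 n" for n
  define M2 where "M2 n = num_msgs R2 n" for n
  define f1 where "f1 n = O.enc1 n (an n) (M1 n)" for n
  define f2 where "f2 n = O.enc2 n (an n) (M2 n)" for n
  define g where "g n = O.decoder n (an n) (M1 n) (M2 n)" for n
  define E2 where "E2 = sspace.E2 DS"
  have E2nn: "E2 \<ge> 0" unfolding E2_def using sspace.E2_nn[OF SS] .
  have th01: "0 \<le> O.th M w \<and> O.th M w \<le> 1" if "w \<in> {1..M}" for M w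
    using that unfolding O.th_def by auto
  have meas: "\<forall>n. measurable_code (f1 n) (f2 n) (g n)"
    unfolding f1_def f2_def g_def using O.code_meas by blast
  have swap: "(\<Sum>k<n. \<Sum>w1\<in>{1..A}. \<Sum>w2\<in>{1..B}. h k w1 w2) = (\<Sum>w1\<in>{1..A}. \<Sum>w2\<in>{1..B}. \<Sum>k<n. h k w1 w2)"
    for n A B and h :: "nat \<Rightarrow> nat \<Rightarrow> nat \<Rightarrow> ennreal"
  proof -
    have "(\<Sum>k<n. \<Sum>w1\<in>{1..A}. \<Sum>w2\<in>{1..B}. h k w1 w2) = (\<Sum>w1\<in>{1..A}. \<Sum>k<n. \<Sum>w2\<in>{1..B}. h k w1 w2)"
      by (rule sum.swap)
    also have "\<dots> = (\<Sum>w1\<in>{1..A}. \<Sum>w2\<in>{1..B}. \<Sum>k<n. h k w1 w2)"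
      by (intro sum.cong refl sum.swap)
    finally show ?thesis .
  qed
  have energy: "\<forall>\<epsilon>>0. eventually (\<lambda>n.
            total_energy DS sigmaZ n (num_msgs R1 n) (num_msgs R2 n) (f1 n) (f2 n) (f1 n) True
              \<le> ennreal (real n * real (num_msgs R1 n) * real (num_msgs R2 n) * (P1 + \<epsilon>)) \<and>
            total_energy DS sigmaZ n (num_msgs R1 n) (num_msgs R2 n) (f1 n) (f2 n) (f2 n) False
              \<le> ennreal (real n * real (num_msgs R1 n) * real (num_msgs R2 n) * (P2 + \<epsilon>)))
          sequentially"
  proof (intro allI impI)
    fix \<epsilon> :: real assume eps: "\<epsilon> > 0"
    define C1 where "C1 = 3 * E2 + 3 * B1\<^sup>2 * E2 + sigmaZ\<^sup>2 * O.mu\<^sup>2"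
    define C2 where "C2 = 3 * E2 + 3 * B2\<^sup>2 * E2"
    have C1nn: "C1 \<ge> 0" unfolding C1_def using E2nn by simp
    have C2nn: "C2 \<ge> 0" unfolding C2_def using E2nn by simp
    have ev: "eventually (\<lambda>n. n \<ge> 2 \<and> 3 * sqrt (real n) + C1 \<le> real n * \<epsilon> \<and> 3 * sqrt (real n) + C2 \<le> real n * \<epsilon>) sequentially"
      using ev_sqrt[OF eps C1nn] ev_sqrt[OF eps C2nn] eventually_ge_at_top[of 2]
      by eventually_elim auto
    show "eventually (\<lambda>n.
            total_energy DS sigmaZ n (num_msgs R1 n) (num_msgs R2 n) (f1 n) (f2 n) (f1 n) True
              \<le> ennreal (real n * real (num_msgs R1 n) * real (num_msgs R2 n) * (P1 + \<epsilon>)) \<and>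
            total_energy DS sigmaZ n (num_msgs R1 n) (num_msgs R2 n) (f1 n) (f2 n) (f2 n) False
              \<le> ennreal (real n * real (num_msgs R1 n) * real (num_msgs R2 n) * (P2 + \<epsilon>)))
          sequentially"
      using ev
    proof eventually_elim
      case (elim n)
      hence n2: "n \<ge> 2" and c1: "3 * sqrt (real n) + C1 \<le> real n * \<epsilon>" and c2: "3 * sqrt (real n) + C2 \<le> real n * \<epsilon>" by auto
      have a: "an n > 0" using an_pos[OF n2] .
      have ssq: "sample_space DS sigmaZ n = sspace.Om DS sigmaZ n" using ss_eq[OF SS] .
      define Eb1 where "Eb1 = 3 * (an n)\<^sup>2 + 3 * E2 + 3 * B1\<^sup>2 * E2 + sigmaZ\<^sup>2 * O.mu\<^sup>2 + real (n-2) * x\<^sup>2"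
      define Eb2 where "Eb2 = 3 * (an n)\<^sup>2 + 3 * E2 + 3 * B2\<^sup>2 * E2 + real (n-2) * y\<^sup>2"
      have Eb1le: "Eb1 \<le> real n * (P1 + \<epsilon>)"
      proof -
        have "real (n-2) * x\<^sup>2 \<le> real n * P1" using n2 P1 unfolding x2 by (intro mult_right_mono) auto
        thus ?thesis using c1 unfolding Eb1_def C1_def an_sq by (simp add: algebra_simps)
      qed
      have Eb2le: "Eb2 \<le> real n * (P2 + \<epsilon>)"
      proof -
        have "real (n-2) * y\<^sup>2 \<le> real n * P2" using n2 P2 unfolding y2 by (intro mult_right_mono) auto
        thus ?thesis using c2 unfolding Eb2_def C2_def an_sq by (simp add: algebra_simps)
      qed
      have inner1: "(\<Sum>k<n. \<integral>\<^sup>+\<omega>. ennreal ((mac_input (f1 n) (f1 n) (f2 n) w1 w1 w2 (fst \<omega>) (snd \<omega>) k)\<^sup>2) \<partial>sample_space DS sigmaZ n)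
          \<le> ennreal Eb1" if "w1 \<in> {1..M1 n}" for w1 w2
        unfolding ssq f1_def f2_def Eb1_def E2_def
        by (rule full.energy1[OF F n2 a]) (use th01[OF that] B1 a in auto)
      have inner2: "(\<Sum>k<n. \<integral>\<^sup>+\<omega>. ennreal ((mac_input (f2 n) (f1 n) (f2 n) w2 w1 w2 (fst \<omega>) (snd \<omega>) k)\<^sup>2) \<partial>sample_space DS sigmaZ n)
          \<le> ennreal Eb2" if "w2 \<in> {1..M2 n}" for w1 w2
        unfolding ssq f1_def f2_def Eb2_def E2_def
        by (rule full.energy2[OF F n2 a]) (use th01[OF that] B2 a in auto)
      have T1: "total_energy DS sigmaZ n (M1 n) (M2 n) (f1 n) (f2 n) (f1 n) True
          \<le> ennreal (real n * real (M1 n) * real (M2 n) * (P1 + \<epsilon>))"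
      proof -
        have "total_energy DS sigmaZ n (M1 n) (M2 n) (f1 n) (f2 n) (f1 n) True
          = (\<Sum>w1\<in>{1..M1 n}. \<Sum>w2\<in>{1..M2 n}. \<Sum>k<n. \<integral>\<^sup>+\<omega>. ennreal ((mac_input (f1 n) (f1 n) (f2 n) w1 w1 w2 (fst \<omega>) (snd \<omega>) k)\<^sup>2) \<partial>sample_space DS sigmaZ n)"
          unfolding total_energy_def if_True by (rule swap)
        also have "\<dots> \<le> (\<Sum>w1\<in>{1..M1 n}. \<Sum>w2\<in>{1..M2 n}. ennreal Eb1)"
          by (intro sum_mono inner1) auto
        also have "\<dots> = ennreal (real (M1 n) * real (M2 n) * Eb1)"
          by (simp add: ennreal_mult' ennreal_of_nat_eq_real_of_nat mult.assoc)
        also have "\<dots> \<le> ennreal (real (M1 n) * real (M2 n) * (real n * (P1 + \<epsilon>)))"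
          using Eb1le by (intro ennreal_leI mult_left_mono) auto
        finally show ?thesis by (simp add: ac_simps)
      qed
      have T2: "total_energy DS sigmaZ n (M1 n) (M2 n) (f1 n) (f2 n) (f2 n) False
          \<le> ennreal (real n * real (M1 n) * real (M2 n) * (P2 + \<epsilon>))"
      proof -
        have "total_energy DS sigmaZ n (M1 n) (M2 n) (f1 n) (f2 n) (f2 n) False
          = (\<Sum>w1\<in>{1..M1 n}. \<Sum>w2\<in>{1..M2 n}. \<Sum>k<n. \<integral>\<^sup>+\<omega>. ennreal ((mac_input (f2 n) (f1 n) (f2 n) w2 w1 w2 (fst \<omega>) (snd \<omega>) k)\<^sup>2) \<partial>sample_space DS sigmaZ n)"
          unfolding total_energy_def if_False by (rule swap)
        also have "\<dots> \<le> (\<Sum>w1\<in>{1..M1 n}. \<Sum>w2\<in>{1..M2 n}. ennreal Eb2)"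
          by (intro sum_mono inner2) auto
        also have "\<dots> = ennreal (real (M1 n) * real (M2 n) * Eb2)"
          by (simp add: ennreal_mult' ennreal_of_nat_eq_real_of_nat mult.assoc)
        also have "\<dots> \<le> ennreal (real (M1 n) * real (M2 n) * (real n * (P2 + \<epsilon>)))"
          using Eb2le by (intro ennreal_leI mult_left_mono) auto
        finally show ?thesis by (simp add: ac_simps)
      qed
      show ?case using T1 T2 unfolding M1_def M2_def by blast
    qed
  qed
  define K where "K = 16 * sigmaZ\<^sup>2 * r1\<^sup>2 + 16 * sigmaZ\<^sup>2 * r2\<^sup>2 / (1 - \<rho>\<^sup>2)"
  have errb: "error_prob DS sigmaZ n (M1 n) (M2 n) (f1 n) (f2 n) (g n) \<le> K / sqrt (real n)" if n2: "n \<ge> 2" for n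
  proof -
    have a: "an n > 0" using an_pos[OF n2] .
    have ssq: "sample_space DS sigmaZ n = sspace.Om DS sigmaZ n" using ss_eq[OF SS] .
    have Mp: "M1 n > 0" "M2 n > 0" unfolding M1_def M2_def using msgs_pos by auto
    define bnd where "bnd = 4 * (real (M1 n))\<^sup>2 * (O.sig1 (an n) (n-2))\<^sup>2 + 4 * (real (M2 n))\<^sup>2 * (O.sig2 (an n) (n-2))\<^sup>2"
    have each: "measure (sample_space DS sigmaZ n) {\<omega> \<in> space (sample_space DS sigmaZ n).
             g n (past_out (f1 n) (f2 n) w1 w2 (fst \<omega>) (snd \<omega>) n) \<noteq> (w1, w2)} \<le> bnd"
      if "w1 \<in> {1..M1 n}" "w2 \<in> {1..M2 n}" for w1 w2
      unfolding ssq f1_def f2_def g_def bnd_def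
      by (rule full.err_bound[OF F n2 a Mp that])
    have "error_prob DS sigmaZ n (M1 n) (M2 n) (f1 n) (f2 n) (g n)
       \<le> (1 / (real (M1 n) * real (M2 n))) * (\<Sum>w1\<in>{1..M1 n}. \<Sum>w2\<in>{1..M2 n}. bnd)"
      unfolding error_prob_def using Mp
      by (intro mult_left_mono sum_mono each) auto
    also have "\<dots> = bnd" using Mp by simp
    also have "bnd \<le> K / sqrt (real n)"
    proof -
      have pr1: "(2 powr (real n * R1))\<^sup>2 = O.r1 ^ n" by (rule pow_R[OF O.r1_ge R1r])
      have pr2: "(2 powr (real n * R2))\<^sup>2 = O.r2 ^ n" by (rule pow_R[OF O.r2_ge R2r])
      have m1: "(real (M1 n))\<^sup>2 \<le> 4 * O.r1 ^ n"
      proof -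
        have "(real (M1 n))\<^sup>2 \<le> (2 * 2 powr (real n * R1))\<^sup>2"
          unfolding M1_def by (intro power_mono msgs_le R1nn) simp
        thus ?thesis unfolding power_mult_distrib pr1 by simp
      qed
      have m2: "(real (M2 n))\<^sup>2 \<le> 4 * O.r2 ^ n"
      proof -
        have "(real (M2 n))\<^sup>2 \<le> (2 * 2 powr (real n * R2))\<^sup>2"
          unfolding M2_def by (intro power_mono msgs_le R2nn) simp
        thus ?thesis unfolding power_mult_distrib pr2 by simp
      qed
      have "\<rho>\<^sup>2 < 1" using rho rlt by (simp add: abs_square_less_1)
      hence q: "1 - \<rho>\<^sup>2 > 0" by simp
      have r1pow: "r1 ^ n = r1\<^sup>2 * r1 ^ (n-2)" using n2
        by (metis le_add_diff_inverse power_add)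
      have r2pow: "r2 ^ n = r2\<^sup>2 * r2 ^ (n-2)" using n2
        by (metis le_add_diff_inverse power_add)
      have rp1: "O.r1 ^ (n-2) > 0" and rp2: "O.r2 ^ (n-2) > 0" using O.r1_ge O.r2_ge by auto
      have t1: "4 * (real (M1 n))\<^sup>2 * (O.sig1 (an n) (n-2))\<^sup>2 \<le> 16 * sigmaZ\<^sup>2 * r1\<^sup>2 / sqrt (real n)"
      proof -
        have "4 * (real (M1 n))\<^sup>2 * (O.sig1 (an n) (n-2))\<^sup>2 \<le> 4 * (4 * O.r1 ^ n) * (O.sig1 (an n) (n-2))\<^sup>2"
          using m1 by (intro mult_right_mono mult_left_mono) auto
        also have "\<dots> = 16 * sigmaZ\<^sup>2 * r1\<^sup>2 / sqrt (real n)"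
          unfolding O.sig1_sq[OF a] an_sq using rp1 N0 n2 r1e r1pow
          by (simp add: field_simps)
        finally show ?thesis .
      qed
      have t2: "4 * (real (M2 n))\<^sup>2 * (O.sig2 (an n) (n-2))\<^sup>2 \<le> 16 * sigmaZ\<^sup>2 * r2\<^sup>2 / (1 - \<rho>\<^sup>2) / sqrt (real n)"
      proof -
        have "4 * (real (M2 n))\<^sup>2 * (O.sig2 (an n) (n-2))\<^sup>2 \<le> 4 * (4 * O.r2 ^ n) * (O.sig2 (an n) (n-2))\<^sup>2"
          using m2 by (intro mult_right_mono mult_left_mono) auto
        also have "\<dots> = 16 * sigmaZ\<^sup>2 * r2\<^sup>2 / (1 - \<rho>\<^sup>2) / sqrt (real n)"
          unfolding O.sig2_sq[OF a] an_sq r2e r2pow using rp2 q n2 r2e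
          by (intro alg_t2) auto
        finally show ?thesis .
      qed
      show ?thesis using t1 t2 unfolding bnd_def K_def by (simp add: add_divide_distrib)
    qed
    finally show ?thesis .
  qed
  have errnn: "error_prob DS sigmaZ n (M1 n) (M2 n) (f1 n) (f2 n) (g n) \<ge> 0" for n
    unfolding error_prob_def by (intro mult_nonneg_nonneg sum_nonneg) auto
  have lim: "(\<lambda>n. error_prob DS sigmaZ n (M1 n) (M2 n) (f1 n) (f2 n) (g n)) \<longlonglongrightarrow> 0"
  proof (rule tendsto_sandwich[OF _ _ tendsto_const lim_inv_sqrt[of K]])
    show "eventually (\<lambda>n. 0 \<le> error_prob DS sigmaZ n (M1 n) (M2 n) (f1 n) (f2 n) (g n)) sequentially"
      using errnn by simp
    show "eventually (\<lambda>n. error_prob DS sigmaZ n (M1 n) (M2 n) (f1 n) (f2 n) (g n) \<le> K / sqrt (real n)) sequentially"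
      using eventually_ge_at_top[of 2] by eventually_elim (rule errb)
  qed
  show ?thesis unfolding achievable_def
    using meas energy lim unfolding M1_def M2_def by blast
qed


end
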